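(* Let $\Pi$ be a homogeneous Poisson point process in $\mathbb{R}^2$ of unit intensity. Let $A=(0,0)$, $B=(1,0)$, and let $C$ be the point of $\Pi$ nearest to $(0,0)$. Let $\alpha$ be the interior angle of triangle $ABC$ at $B=(1,0)$ and $\beta$ the interior angle at $A=(0,0)$. Then the joint density of $(\alpha,\beta)$ is \[ 2\exp\!\left[-\pi\frac{\sin(x)^2}{\sin(x+y)^2}\right]\frac{\sin(x)\sin(y)}{\sin(x+y)^3}\quad\text{for } x>0,\ y>0,\ x+y<\pi, \] and $0$ otherwise.
   Context: The triangle $ABC$ so defined is called a staked Poissonian triangle. For $C=(u,v)$ with $v>0$, the angles satisfy $\tan\alpha=v/(1-u)$ and $\tan\beta=v/u$. *)

theory Defs
  imports "HOL-Probability.Probability"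
begin

definition unit_poisson_point_process ::
  "'w measure \<Rightarrow> ('w \<Rightarrow> (real \<times> real) set) \<Rightarrow> bool" where
  "unit_poisson_point_process M Pts \<longleftrightarrow>
     prob_space M \<and>
     (\<forall>\<omega>\<in>space M. \<forall>B. bounded B \<longrightarrow> finite (Pts \<omega> \<inter> B)) \<and>
     (\<forall>B \<in> sets (lborel :: (real \<times> real) measure). bounded B \<longrightarrow>
        (\<lambda>\<omega>. card (Pts \<omega> \<inter> B)) \<in> measurable M (count_space UNIV) \<and>
        (\<forall>k::nat. measure M {\<omega> \<in> space M. card (Pts \<omega> \<inter> B) = k}
            = (measure lborel B) ^ k / fact k * exp (- measure lborel B))) \<and>
     (\<forall>(I :: nat set) (Bs :: nat \<Rightarrow> (real \<times> real) set).
        finite I \<longrightarrow> disjoint_family_on Bs I \<longrightarrow>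
        (\<forall>i\<in>I. Bs i \<in> sets lborel \<and> bounded (Bs i)) \<longrightarrow>
        prob_space.indep_vars M (\<lambda>_. count_space UNIV) (\<lambda>i \<omega>. card (Pts \<omega> \<inter> Bs i)) I)"

text \<open>The point of a set nearest to the origin (when it exists and is unique;
  otherwise an arbitrary fixed default, which only matters on a null event).\<close>

definition nearest_to_origin :: "(real \<times> real) set \<Rightarrow> real \<times> real" where
  "nearest_to_origin P =
     (if \<exists>!c. c \<in> P \<and> (\<forall>p\<in>P. norm c \<le> norm p)
      then (THE c. c \<in> P \<and> (\<forall>p\<in>P. norm c \<le> norm p)) else (0, 0))"

definition vangle :: "real \<times> real \<Rightarrow> real \<times> real \<Rightarrow> real" where
  "vangle u v = arccos ((u \<bullet> v) / (norm u * norm v))"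

definition interior_angle :: "real \<times> real \<Rightarrow> real \<times> real \<Rightarrow> real \<times> real \<Rightarrow> real" where
  "interior_angle P Q R = vangle (Q - P) (R - P)"

end

theory Submission
  imports Defs
begin

lemma arccos_out: "\<not> (-1 \<le> y \<and> y \<le> 1) \<Longrightarrow> arccos y = arccos 2"
  unfolding arccos_def
proof -
  assume a: "\<not> (-1 \<le> y \<and> y \<le> 1)"
  have "\<And>x. \<not> (0 \<le> x \<and> x \<le> pi \<and> cos x = y)" using a
    by (smt (verit) cos_ge_minus_one cos_le_one)
  moreover have "\<And>x. \<not> (0 \<le> x \<and> x \<le> pi \<and> cos x = 2)"
    by (smt (verit) cos_le_one)
  ultimately have "(\<lambda>x. 0 \<le> x \<and> x \<le> pi \<and> cos x = y) = (\<lambda>x. 0 \<le> x \<and> x \<le> pi \<and> cos x = 2)"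
    by auto
  then show "(THE x. 0 \<le> x \<and> x \<le> pi \<and> cos x = y) = (THE x. 0 \<le> x \<and> x \<le> pi \<and> cos x = 2)"
    by simp
qed

lemma arccos_meas0: "arccos \<in> borel_measurable borel"
proof -
  have c: "(\<lambda>x. indicator {-1..1} x *\<^sub>R arccos x) \<in> borel_measurable borel"
    by (intro borel_measurable_continuous_on_indicator continuous_on_arccos') auto
  have "arccos = (\<lambda>x. if x \<in> {-1..1} then indicator {-1..1} x *\<^sub>R arccos x else arccos 2)"
    proof (rule ext)
    fix x :: real show "arccos x = (if x \<in> {-1..1} then indicator {-1..1} x *\<^sub>R arccos x else arccos 2)"
      using arccos_out[of x] by (cases "x \<in> {-1..1}") auto
  qed
  also have "\<dots> \<in> borel_measurable borel" using c by measurable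
  finally show ?thesis .
qed

lemma sin_meas0: "(sin :: real \<Rightarrow> real) \<in> borel_measurable borel"
proof -
  have "continuous_on UNIV (\<lambda>x::real. sin x)" by (intro continuous_intros)
  then show ?thesis by (rule borel_measurable_continuous_onI)
qed
lemma sin_meas[measurable (raw)]: "(f :: 'a \<Rightarrow> real) \<in> borel_measurable M \<Longrightarrow> (\<lambda>x. sin (f x)) \<in> borel_measurable M"
  by (erule measurable_compose[OF _ sin_meas0])
lemma arccos_meas[measurable (raw)]: "f \<in> borel_measurable M \<Longrightarrow> (\<lambda>x. arccos (f x)) \<in> borel_measurable M"
  by (erule measurable_compose[OF _ arccos_meas0])

definition g0 :: "real \<times> real \<Rightarrow> real" where "g0 c = exp (- pi * (norm c)^2)"
definition Phi :: "real \<times> real \<Rightarrow> real \<times> real" where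
 "Phi c = (interior_angle (1, 0) (0, 0) c, interior_angle (0, 0) (1, 0) c)"
definition fd :: "real \<times> real \<Rightarrow> real" where
 "fd = (\<lambda>(x, y). (if 0 < x \<and> 0 < y \<and> x + y < pi
        then 2 * exp (- pi * (sin x ^ 2 / sin (x + y) ^ 2)) * (sin x * sin y / sin (x + y) ^ 3)
        else 0))"


lemma fd_meas: "fd \<in> borel_measurable borel"
  unfolding fd_def case_prod_beta borel_prod[symmetric] by measurable

lemma Phi_eq: "Phi c = (arccos ((1 - fst c) / sqrt ((1 - fst c)^2 + (snd c)^2)),
    arccos (fst c / sqrt ((fst c)^2 + (snd c)^2)))"
proof (cases c)
  case (Pair u v)
  have "norm ((u, v) - (1, 0)) = sqrt ((1 - u)^2 + v^2)"
    by (simp add: norm_Pair power2_eq_square algebra_simps)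
  then show ?thesis using Pair by (simp add: Phi_def interior_angle_def vangle_def norm_Pair)
qed

lemma Phi_meas: "Phi \<in> borel_measurable borel"
  unfolding Phi_eq[abs_def] borel_prod[symmetric] by measurable


lemma nn_link:
  fixes F :: "real \<Rightarrow> real"
  assumes Fm: "(\<lambda>x. indicator S x * F x) \<in> borel_measurable borel"
  and nn: "\<And>x. x \<in> S \<Longrightarrow> 0 \<le> F x"
  shows "(\<integral>\<^sup>+x. ennreal (F x) * indicator S x \<partial>lborel) =
     (if F absolutely_integrable_on S then ennreal (integral S F) else \<infinity>)"
proof -
  define G where "G x = indicator S x * F x" for x
  have Gm: "G \<in> borel_measurable lborel" using Fm unfolding G_def by simp
  have Gnn: "\<And>x. 0 \<le> G x" using nn unfolding G_def by (simp add: indicator_def)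
  have eq1: "(\<integral>\<^sup>+x. ennreal (F x) * indicator S x \<partial>lborel) = (\<integral>\<^sup>+x. ennreal (G x) \<partial>lborel)"
    by (intro nn_integral_cong) (auto simp: G_def indicator_def)
  have iff: "F absolutely_integrable_on S \<longleftrightarrow> integrable lborel G"
  proof -
    have "F absolutely_integrable_on S \<longleftrightarrow> integrable lebesgue G"
      unfolding set_integrable_def G_def by simp
    also have "\<dots> \<longleftrightarrow> integrable lborel G" using Gm by (intro integrable_completion) simp
    finally show ?thesis .
  qed
  show ?thesis
  proof (cases "F absolutely_integrable_on S")
    case True
    then have int: "integrable lborel G" using iff by simp
    have "(\<integral>\<^sup>+x. ennreal (G x) \<partial>lborel) = ennreal (integral\<^sup>L lborel G)"
      using int Gnn by (intro nn_integral_eq_integral) auto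
    also have "integral\<^sup>L lborel G = integral\<^sup>L lebesgue G"
      using Gm by (intro integral_completion[symmetric]) simp
    also have "\<dots> = (LINT x:S|lebesgue. F x)"
      unfolding set_lebesgue_integral_def G_def by simp
    also have "\<dots> = integral S F" using True by (rule set_lebesgue_integral_eq_integral(2))
    finally show ?thesis using True eq1 by simp
  next
    case False
    then have nint: "\<not> integrable lborel G" using iff by simp
    have "(\<integral>\<^sup>+x. ennreal (G x) \<partial>lborel) = \<infinity>"
    proof (rule ccontr)
      assume "(\<integral>\<^sup>+x. ennreal (G x) \<partial>lborel) \<noteq> \<infinity>"
      then have "(\<integral>\<^sup>+x. ennreal (G x) \<partial>lborel) < \<infinity>" by (simp add: top.not_eq_extremum)
      then have "integrable lborel G" using Gm Gnn by (intro integrableI_nonneg) auto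
      then show False using nint by simp
    qed
    then show ?thesis using False eq1 by simp
  qed
qed

lemma nn_subst:
  fixes g g' h :: "real \<Rightarrow> real"
  assumes S: "S \<in> sets borel" and T: "T \<in> sets borel"
  and der: "\<And>x. x \<in> S \<Longrightarrow> (g has_real_derivative g' x) (at x)"
  and inj: "inj_on g S" and img: "g ` S = T"
  and hm: "h \<in> borel_measurable borel" and hn: "\<And>x. 0 \<le> h x"
  and m2: "(\<lambda>x. indicator S x * (\<bar>g' x\<bar> * h (g x))) \<in> borel_measurable borel"
  shows "(\<integral>\<^sup>+x. ennreal (h x) * indicator T x \<partial>lborel) =
         (\<integral>\<^sup>+x. ennreal (\<bar>g' x\<bar> * h (g x)) * indicator S x \<partial>lborel)"
proof -
  have SL: "S \<in> sets lebesgue" using S by simp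
  have der': "\<And>x. x \<in> S \<Longrightarrow> (g has_field_derivative g' x) (at x within S)"
    using der by (simp add: has_field_derivative_at_within)
  have m1: "(\<lambda>x. indicator T x * h x) \<in> borel_measurable borel" using T hm by measurable
  have L: "(\<integral>\<^sup>+x. ennreal (h x) * indicator T x \<partial>lborel) =
     (if h absolutely_integrable_on T then ennreal (integral T h) else \<infinity>)"
    using m1 hn by (intro nn_link) auto
  have R: "(\<integral>\<^sup>+x. ennreal (\<bar>g' x\<bar> * h (g x)) * indicator S x \<partial>lborel) =
     (if (\<lambda>x. \<bar>g' x\<bar> * h (g x)) absolutely_integrable_on S
      then ennreal (integral S (\<lambda>x. \<bar>g' x\<bar> * h (g x))) else \<infinity>)"
    using m2 hn by (intro nn_link) auto
  have cv: "(\<lambda>x. \<bar>g' x\<bar> * h (g x)) absolutely_integrable_on S \<and>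
           integral S (\<lambda>x. \<bar>g' x\<bar> * h (g x)) = b
     \<longleftrightarrow> h absolutely_integrable_on (g ` S) \<and> integral (g ` S) h = b" for b
    by (rule has_absolute_integral_change_of_variables_1'[OF SL der' inj])
  show ?thesis
    unfolding L R using cv[of "integral T h"] cv[of "integral S (\<lambda>x. \<bar>g' x\<bar> * h (g x))"] img
    by auto
qed


lemma cos_meas0: "(cos :: real \<Rightarrow> real) \<in> borel_measurable borel"
proof -
  have "continuous_on UNIV (\<lambda>x::real. cos x)" by (intro continuous_intros)
  then show ?thesis by (rule borel_measurable_continuous_onI)
qed
lemma cos_meas[measurable (raw)]: "(f :: 'a \<Rightarrow> real) \<in> borel_measurable M \<Longrightarrow> (\<lambda>x. cos (f x)) \<in> borel_measurable M"
  by (erule measurable_compose[OF _ cos_meas0])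
lemma cot_meas[measurable (raw)]: "(f :: 'a \<Rightarrow> real) \<in> borel_measurable M \<Longrightarrow> (\<lambda>x. cot (f x)) \<in> borel_measurable M"
  unfolding cot_def by (intro borel_measurable_divide sin_meas cos_meas)

lemma subst_inv:
  fixes h :: "real \<Rightarrow> real"
  assumes hm[measurable]: "h \<in> borel_measurable borel" and hn: "\<And>x. 0 \<le> h x"
  shows "(\<integral>\<^sup>+v. ennreal (h v) * indicator {0<..} v \<partial>lborel) =
         (\<integral>\<^sup>+s. ennreal (h (1 / s) / s^2) * indicator {0<..} s \<partial>lborel)"
proof -
  have img: "inverse ` {0<..} = {0::real<..}"
  proof
    show "inverse ` {0<..} \<subseteq> {0::real<..}" by auto
    show "{0::real<..} \<subseteq> inverse ` {0<..}"
    proof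
      fix y :: real assume "y \<in> {0<..}"
      then have "y = inverse (inverse y)" "inverse y \<in> {0<..}" by auto
      then show "y \<in> inverse ` {0<..}" by blast
    qed
  qed
  have "(\<integral>\<^sup>+v. ennreal (h v) * indicator {0<..} v \<partial>lborel) =
       (\<integral>\<^sup>+s. ennreal (\<bar>- (inverse s ^ 2)\<bar> * h (inverse s)) * indicator {0<..} s \<partial>lborel)"
  proof (rule nn_subst[OF _ _ _ _ img hm hn])
    show "(\<lambda>x. indicator {0<..} x * (\<bar>- (inverse x ^ 2)\<bar> * h (inverse x))) \<in> borel_measurable borel"
      by measurable
    show "inj_on inverse {0::real<..}" by (auto simp: inj_on_def)
    fix x :: real assume "x \<in> {0<..}"
    then show "(inverse has_real_derivative - (inverse x ^ 2)) (at x)"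
      using DERIV_inverse[of x] by (simp add: numeral_2_eq_2)
  qed auto
  also have "\<dots> = (\<integral>\<^sup>+s. ennreal (h (1 / s) / s^2) * indicator {0<..} s \<partial>lborel)"
    by (intro nn_integral_cong) (auto simp: indicator_def field_simps power2_eq_square)
  finally show ?thesis .
qed

lemma cot_pi2: "cot (pi/2 - a) = tan (a::real)"
  by (simp add: cot_def tan_def sin_diff cos_diff)

lemma cot_inj: "inj_on (cot :: real \<Rightarrow> real) {0<..<pi}"
proof (rule inj_onI)
  fix x y :: real assume x: "x \<in> {0<..<pi}" and y: "y \<in> {0<..<pi}" and e: "cot x = cot y"
  have "cot x = tan (pi/2 - x)" using cot_pi2[of "pi/2 - x"] by simp
  moreover have "cot y = tan (pi/2 - y)" using cot_pi2[of "pi/2 - y"] by simp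
  ultimately have "arctan (tan (pi/2 - x)) = arctan (tan (pi/2 - y))" using e by simp
  moreover have "arctan (tan (pi/2 - x)) = pi/2 - x" using x by (intro arctan_tan) auto
  moreover have "arctan (tan (pi/2 - y)) = pi/2 - y" using y by (intro arctan_tan) auto
  ultimately show "x = y" by simp
qed

lemma cot_img: "cot ` {0<..<pi} = (UNIV :: real set)"
proof -
  have "q \<in> cot ` {0<..<pi}" for q :: real
  proof -
    have a: "- (pi/2) < arctan q \<and> arctan q < pi/2" using arctan[of q] by simp
    have "cot (pi/2 - arctan q) = q" using cot_pi2 tan_arctan by simp
    moreover have "pi/2 - arctan q \<in> {0<..<pi}" using a by auto
    ultimately show ?thesis by (metis image_eqI)
  qed
  then show ?thesis by auto
qed

lemma subst_cot:
  fixes h :: "real \<Rightarrow> real"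
  assumes hm[measurable]: "h \<in> borel_measurable borel" and hn: "\<And>x. 0 \<le> h x"
  shows "(\<integral>\<^sup>+q. ennreal (h q) \<partial>lborel) =
         (\<integral>\<^sup>+x. ennreal (h (cot x) / (sin x)^2) * indicator {0<..<pi} x \<partial>lborel)"
proof -
  have "(\<integral>\<^sup>+q. ennreal (h q) \<partial>lborel) = (\<integral>\<^sup>+q. ennreal (h q) * indicator UNIV q \<partial>lborel)"
    by simp
  also have "\<dots> = (\<integral>\<^sup>+x. ennreal (\<bar>- inverse ((sin x)\<^sup>2)\<bar> * h (cot x)) * indicator {0<..<pi} x \<partial>lborel)"
  proof (rule nn_subst[OF _ _ _ cot_inj cot_img hm hn])
    show "(\<lambda>x. indicator {0<..<pi} x * (\<bar>- inverse ((sin x)\<^sup>2)\<bar> * h (cot x))) \<in> borel_measurable borel"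
      by measurable
    fix x :: real assume "x \<in> {0<..<pi}"
    then have "sin x \<noteq> 0" using sin_gt_zero by fastforce
    then show "(cot has_real_derivative - inverse ((sin x)\<^sup>2)) (at x)" by (rule DERIV_cot)
  qed auto
  also have "\<dots> = (\<integral>\<^sup>+x. ennreal (h (cot x) / (sin x)^2) * indicator {0<..<pi} x \<partial>lborel)"
    by (intro nn_integral_cong) (auto simp: indicator_def field_simps)
  finally show ?thesis .
qed


definition Psi :: "real \<times> real \<Rightarrow> real \<times> real" where
  "Psi z = (cos (snd z) * sin (fst z) / sin (fst z + snd z), sin (fst z) * sin (snd z) / sin (fst z + snd z))"
definition Jac :: "real \<times> real \<Rightarrow> real" where
  "Jac z = sin (fst z) * sin (snd z) / sin (fst z + snd z) ^ 3"
definition Tset :: "(real \<times> real) set" where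
  "Tset = {z. 0 < fst z \<and> 0 < snd z \<and> fst z + snd z < pi}"

lemma CV_A:
  fixes G :: "real \<times> real \<Rightarrow> real"
  assumes Gm: "G \<in> borel_measurable borel" and Gn: "\<And>c. 0 \<le> G c"
  shows "(\<integral>\<^sup>+c. ennreal (G c) * indicator {c. 0 < snd c} c \<partial>lborel) =
    (\<integral>\<^sup>+p. \<integral>\<^sup>+q. ennreal (if 0 < p + q then G (p / (p + q), 1 / (p + q)) / (p + q) ^ 3 else 0) \<partial>lborel \<partial>lborel)"
proof -
  have Gm2[measurable]: "G \<in> borel_measurable (borel \<Otimes>\<^sub>M borel)" using Gm by (simp add: borel_prod)
  have "(\<integral>\<^sup>+c. ennreal (G c) * indicator {c. 0 < snd c} c \<partial>lborel) =
        (\<integral>\<^sup>+c. ennreal (G c) * indicator {c. 0 < snd c} c \<partial>(lborel \<Otimes>\<^sub>M lborel))"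
    by (simp add: lborel_prod)
  also have "\<dots> = (\<integral>\<^sup>+v. \<integral>\<^sup>+u. ennreal (G (u, v)) * indicator {c. 0 < snd c} (u, v) \<partial>lborel \<partial>lborel)"
    by (rule lborel_pair.nn_integral_snd[symmetric]) measurable
  also have "\<dots> = (\<integral>\<^sup>+v. \<integral>\<^sup>+p. ennreal (v * G (v * p, v)) * indicator {0<..} v \<partial>lborel \<partial>lborel)"
  proof (rule nn_integral_cong)
    fix v :: real
    show "(\<integral>\<^sup>+u. ennreal (G (u, v)) * indicator {c. 0 < snd c} (u, v) \<partial>lborel) =
          (\<integral>\<^sup>+p. ennreal (v * G (v * p, v)) * indicator {0<..} v \<partial>lborel)"
    proof (cases "0 < v")
      case True
      have "(\<integral>\<^sup>+u. ennreal (G (u, v)) * indicator {c. 0 < snd c} (u, v) \<partial>lborel) =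
            (\<integral>\<^sup>+u. ennreal (G (u, v)) \<partial>lborel)"
        using True by (intro nn_integral_cong) (simp add: indicator_def)
      also have "\<dots> = ennreal \<bar>v\<bar> * (\<integral>\<^sup>+p. ennreal (G (0 + v * p, v)) \<partial>lborel)"
        using True by (intro nn_integral_real_affine) measurable
      also have "\<dots> = (\<integral>\<^sup>+p. ennreal \<bar>v\<bar> * ennreal (G (0 + v * p, v)) \<partial>lborel)"
        by (rule nn_integral_cmult[symmetric]) measurable
      also have "\<dots> = (\<integral>\<^sup>+p. ennreal (v * G (v * p, v)) * indicator {0<..} v \<partial>lborel)"
        using True by (intro nn_integral_cong) (simp add: ennreal_mult' indicator_def)
      finally show ?thesis .
    next
      case False
      then show ?thesis by (simp add: indicator_def)
    qed
  qed
  also have "\<dots> = (\<integral>\<^sup>+p. \<integral>\<^sup>+v. ennreal (v * G (v * p, v)) * indicator {0<..} v \<partial>lborel \<partial>lborel)"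
    by (rule lborel_pair.Fubini') measurable
  also have "\<dots> = (\<integral>\<^sup>+p. \<integral>\<^sup>+q. ennreal (if 0 < p + q then G (p / (p + q), 1 / (p + q)) / (p + q) ^ 3 else 0) \<partial>lborel \<partial>lborel)"
  proof (rule nn_integral_cong)
    fix p :: real
    define h where "h v = \<bar>v\<bar> * G (v * p, v)" for v
    define F where "F s = (if 0 < s then G (p / s, 1 / s) / s ^ 3 else 0)" for s :: real
    have hm: "h \<in> borel_measurable borel" unfolding h_def by measurable
    have hn: "\<And>v. 0 \<le> h v" unfolding h_def using Gn by simp
    have Fm: "F \<in> borel_measurable borel" unfolding F_def by measurable
    have "(\<integral>\<^sup>+v. ennreal (v * G (v * p, v)) * indicator {0<..} v \<partial>lborel) =
          (\<integral>\<^sup>+v. ennreal (h v) * indicator {0<..} v \<partial>lborel)"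
      by (intro nn_integral_cong) (simp add: h_def indicator_def)
    also have "\<dots> = (\<integral>\<^sup>+s. ennreal (h (1 / s) / s^2) * indicator {0<..} s \<partial>lborel)"
      by (rule subst_inv[OF hm hn])
    also have "\<dots> = (\<integral>\<^sup>+s. ennreal (F s) \<partial>lborel)"
      by (intro nn_integral_cong) (simp add: h_def F_def indicator_def field_simps power2_eq_square power3_eq_cube)
    also have "\<dots> = ennreal \<bar>1\<bar> * (\<integral>\<^sup>+q. ennreal (F (p + 1 * q)) \<partial>lborel)"
      by (intro nn_integral_real_affine) (use Fm in measurable)
    also have "\<dots> = (\<integral>\<^sup>+q. ennreal (if 0 < p + q then G (p / (p + q), 1 / (p + q)) / (p + q) ^ 3 else 0) \<partial>lborel)"
      by (simp add: F_def)
    finally show "(\<integral>\<^sup>+v. ennreal (v * G (v * p, v)) * indicator {0<..} v \<partial>lborel) = \<dots>" .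
  qed
  finally show ?thesis .
qed


lemma Kr_pointwise:
  fixes G :: "real \<times> real \<Rightarrow> real" and x y :: real
  assumes x: "0 < x" "x < pi" and y: "0 < y" "y < pi"
  shows "(if 0 < cot y + cot x then G (cot y / (cot y + cot x), 1 / (cot y + cot x)) / (cot y + cot x) ^ 3 else 0)
           / (sin x)^2 / (sin y)^2
        = (if x + y < pi then G (Psi (x, y)) * Jac (x, y) else 0)"
proof -
  have sx: "sin x > 0" using x by (intro sin_gt_zero) auto
  have sy: "sin y > 0" using y by (intro sin_gt_zero) auto
  have sum: "cot y + cot x = sin (x + y) / (sin x * sin y)"
    using sx sy by (simp add: cot_def sin_add field_simps)
  show ?thesis
  proof (cases "x + y < pi")
    case True
    have s: "sin (x + y) > 0" using True x y by (intro sin_gt_zero) auto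
    have pos: "0 < cot y + cot x" using sum s sx sy by simp
    have e1: "cot y / (cot y + cot x) = cos y * sin x / sin (x + y)"
      using sx sy s unfolding sum by (simp add: cot_def field_simps)
    have e2: "1 / (cot y + cot x) = sin x * sin y / sin (x + y)"
      using sx sy s unfolding sum by (simp add: field_simps)
    have e3: "1 / (cot y + cot x) ^ 3 / (sin x)^2 / (sin y)^2 = sin x * sin y / sin (x + y) ^ 3"
      using sx sy s unfolding sum by (simp add: field_simps power2_eq_square power3_eq_cube)
    have eqG: "G (cot y / (cot y + cot x), 1 / (cot y + cot x)) = G (Psi (x, y))"
      using e1 e2 by (simp add: Psi_def)
    have "G (cot y / (cot y + cot x), 1 / (cot y + cot x)) / (cot y + cot x) ^ 3 / (sin x)^2 / (sin y)^2
        = G (Psi (x, y)) * (1 / (cot y + cot x) ^ 3 / (sin x)^2 / (sin y)^2)"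
      unfolding eqG by simp
    also have "\<dots> = G (Psi (x, y)) * Jac (x, y)" unfolding e3 by (simp add: Jac_def)
    finally show ?thesis using True pos by simp
  next
    case False
    have "sin (x + y) \<le> 0"
    proof -
      have "sin (x + y) = - sin (x + y - pi)" by (simp add: sin_diff)
      moreover have "sin (x + y - pi) \<ge> 0" using False x y by (intro sin_ge_zero) auto
      ultimately show ?thesis by simp
    qed
    then have "sin (x + y) / (sin x * sin y) \<le> 0" using sx sy by (intro divide_nonpos_pos) auto
    then have "\<not> 0 < cot y + cot x" using sum by simp
    then show ?thesis using False by simp
  qed
qed

lemma lb2: "f \<in> borel_measurable (borel \<Otimes>\<^sub>M borel) \<Longrightarrow> f \<in> borel_measurable (lborel \<Otimes>\<^sub>M lborel)"
  by (simp add: lborel_prod borel_prod)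

lemma CV_B:
  fixes G :: "real \<times> real \<Rightarrow> real"
  assumes Gm: "G \<in> borel_measurable borel" and Gn: "\<And>c. 0 \<le> G c"
  shows "(\<integral>\<^sup>+p. \<integral>\<^sup>+q. ennreal (if 0 < p + q then G (p / (p + q), 1 / (p + q)) / (p + q) ^ 3 else 0) \<partial>lborel \<partial>lborel)
    = (\<integral>\<^sup>+z. ennreal (G (Psi z) * Jac z) * indicator Tset z \<partial>lborel)"
proof -
  have Gm2[measurable]: "G \<in> borel_measurable (borel \<Otimes>\<^sub>M borel)" using Gm by (simp add: borel_prod)
  define Kr where "Kr p q = (if 0 < p + q then G (p / (p + q), 1 / (p + q)) / (p + q) ^ 3 else 0)" for p q :: real
  have Krm[measurable]: "(\<lambda>z. Kr (fst z) (snd z)) \<in> borel_measurable (borel \<Otimes>\<^sub>M borel)"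
    unfolding Kr_def by measurable
  have Krr[measurable (raw)]: "f \<in> borel_measurable M \<Longrightarrow> g \<in> borel_measurable M \<Longrightarrow> (\<lambda>x. Kr (f x) (g x)) \<in> borel_measurable M"
    for f g :: "'a \<Rightarrow> real" and M
  proof -
    assume f: "f \<in> borel_measurable M" and g: "g \<in> borel_measurable M"
    have "(\<lambda>x. (f x, g x)) \<in> M \<rightarrow>\<^sub>M borel \<Otimes>\<^sub>M borel" using f g by (rule measurable_Pair)
    from measurable_compose[OF this Krm] show ?thesis by simp
  qed
  have Krm1: "Kr p \<in> borel_measurable borel" for p
    unfolding Kr_def by measurable
  have Krm2[measurable]: "(\<lambda>p. Kr p q) \<in> borel_measurable borel" for q
    unfolding Kr_def by measurable
  have Krn: "0 \<le> Kr p q" for p q unfolding Kr_def using Gn by simp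
  define W where "W z = ennreal (Kr (cot (snd z)) (cot (fst z)) / (sin (fst z))^2 / (sin (snd z))^2)
                       * indicator {0<..<pi} (snd z) * indicator {0<..<pi} (fst z)" for z :: "real \<times> real"
  have "(\<integral>\<^sup>+p. \<integral>\<^sup>+q. ennreal (Kr p q) \<partial>lborel \<partial>lborel)
      = (\<integral>\<^sup>+p. \<integral>\<^sup>+x. ennreal (Kr p (cot x) / (sin x)^2) * indicator {0<..<pi} x \<partial>lborel \<partial>lborel)"
    by (rule nn_integral_cong) (rule subst_cot[OF Krm1 Krn])
  also have "\<dots> = (\<integral>\<^sup>+x. \<integral>\<^sup>+p. ennreal (Kr p (cot x) / (sin x)^2) * indicator {0<..<pi} x \<partial>lborel \<partial>lborel)"
    by (rule lborel_pair.Fubini'[symmetric], rule lb2) measurable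
  also have "\<dots> = (\<integral>\<^sup>+x. \<integral>\<^sup>+y. ennreal (Kr (cot y) (cot x) / (sin x)^2 / (sin y)^2) * indicator {0<..<pi} y
                       * indicator {0<..<pi} x \<partial>lborel \<partial>lborel)"
  proof (rule nn_integral_cong)
    fix x :: real
    show "(\<integral>\<^sup>+p. ennreal (Kr p (cot x) / (sin x)^2) * indicator {0<..<pi} x \<partial>lborel) =
          (\<integral>\<^sup>+y. ennreal (Kr (cot y) (cot x) / (sin x)^2 / (sin y)^2) * indicator {0<..<pi} y
                       * indicator {0<..<pi} x \<partial>lborel)"
    proof (cases "x \<in> {0<..<pi}")
      case True
      have hm: "(\<lambda>p. Kr p (cot x) / (sin x)^2) \<in> borel_measurable borel" by measurable
      have "(\<integral>\<^sup>+p. ennreal (Kr p (cot x) / (sin x)^2) * indicator {0<..<pi} x \<partial>lborel)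
          = (\<integral>\<^sup>+p. ennreal (Kr p (cot x) / (sin x)^2) \<partial>lborel)" using True by simp
      also have "\<dots> = (\<integral>\<^sup>+y. ennreal (Kr (cot y) (cot x) / (sin x)^2 / (sin y)^2) * indicator {0<..<pi} y \<partial>lborel)"
        by (rule subst_cot[OF hm]) (simp add: Krn)
      finally show ?thesis using True by simp
    next
      case False then show ?thesis by simp
    qed
  qed
  also have "\<dots> = (\<integral>\<^sup>+x. \<integral>\<^sup>+y. W (x, y) \<partial>lborel \<partial>lborel)"
    by (simp add: W_def)
  also have "\<dots> = (\<integral>\<^sup>+z. W z \<partial>(lborel \<Otimes>\<^sub>M lborel))"
    by (rule lborel.nn_integral_fst) (unfold W_def, rule lb2, measurable)
  also have "\<dots> = (\<integral>\<^sup>+z. ennreal (G (Psi z) * Jac z) * indicator Tset z \<partial>lborel)"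
    unfolding lborel_prod
  proof (rule nn_integral_cong)
    fix z :: "real \<times> real"
    obtain x y where z: "z = (x, y)" by (cases z)
    show "W z = ennreal (G (Psi z) * Jac z) * indicator Tset z"
    proof (cases "x \<in> {0<..<pi} \<and> y \<in> {0<..<pi}")
      case True
      then have "Kr (cot y) (cot x) / (sin x)^2 / (sin y)^2 = (if x + y < pi then G (Psi (x, y)) * Jac (x, y) else 0)"
        unfolding Kr_def by (intro Kr_pointwise) auto
      then show ?thesis using True z by (auto simp: Tset_def indicator_def W_def)
    next
      case False then show ?thesis using z by (auto simp: Tset_def indicator_def W_def)
    qed
  qed
  finally show ?thesis unfolding Kr_def .
qed

lemma CV:
  fixes G :: "real \<times> real \<Rightarrow> real"
  assumes Gm: "G \<in> borel_measurable borel" and Gn: "\<And>c. 0 \<le> G c"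
  shows "(\<integral>\<^sup>+c. ennreal (G c) * indicator {c. 0 < snd c} c \<partial>lborel) =
         (\<integral>\<^sup>+z. ennreal (G (Psi z) * Jac z) * indicator Tset z \<partial>lborel)"
  using CV_A[OF Gm Gn] CV_B[OF Gm Gn] by simp


lemma Psi_props:
  fixes x y :: real
  assumes "0 < x" "0 < y" "x + y < pi"
  shows "Phi (Psi (x, y)) = (x, y)" "g0 (Psi (x, y)) = exp (- pi * (sin x ^ 2 / sin (x + y) ^ 2))"
    "Jac (x, y) > 0"
proof -
  have sx: "sin x > 0" using assms by (intro sin_gt_zero) auto
  have sy: "sin y > 0" using assms by (intro sin_gt_zero) auto
  have s: "sin (x + y) > 0" using assms by (intro sin_gt_zero) auto
  define u where "u = cos y * sin x / sin (x + y)"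
  define v where "v = sin x * sin y / sin (x + y)"
  have P: "Psi (x, y) = (u, v)" by (simp add: Psi_def u_def v_def)
  have n1: "u^2 + v^2 = (sin x / sin (x + y))^2"
  proof -
    define a where "a = sin x / sin (x + y)"
    have u': "u = cos y * a" unfolding u_def a_def by simp
    have v': "v = sin y * a" unfolding v_def a_def by simp
    have "u^2 + v^2 = a^2 * (cos y)^2 + a^2 * (sin y)^2" unfolding u' v' by (simp add: power_mult_distrib algebra_simps)
    also have "\<dots> = a^2 * ((cos y)^2 + (sin y)^2)" by (simp only: distrib_left)
    also have "\<dots> = a^2" by (simp only: sin_cos_squared_add2 mult_1_right)
    finally show ?thesis unfolding a_def .
  qed
  have q1: "1 - u = cos x * sin y / sin (x + y)"
    using s by (simp add: u_def field_simps sin_add)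
  have n2: "(1 - u)^2 + v^2 = (sin y / sin (x + y))^2"
  proof -
    define a where "a = sin y / sin (x + y)"
    have u': "1 - u = cos x * a" unfolding q1 a_def by simp
    have v': "v = sin x * a" unfolding v_def a_def by simp
    have "(1 - u)^2 + v^2 = a^2 * (cos x)^2 + a^2 * (sin x)^2" unfolding u' v' by (simp add: power_mult_distrib algebra_simps)
    also have "\<dots> = a^2 * ((cos x)^2 + (sin x)^2)" by (simp only: distrib_left)
    also have "\<dots> = a^2" by (simp only: sin_cos_squared_add2 mult_1_right)
    finally show ?thesis unfolding a_def .
  qed
  have sq2: "sqrt ((1 - u)^2 + v^2) = sin y / sin (x + y)"
    unfolding n2 using sy s by simp
  have sq1: "sqrt (u^2 + v^2) = sin x / sin (x + y)"
    unfolding n1 using sx s by simp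
  have r1: "(1 - u) / sqrt ((1 - u)^2 + v^2) = cos x"
    unfolding sq2 unfolding q1 using sy s by (simp add: field_simps)
  have r2: "u / sqrt (u^2 + v^2) = cos y"
    unfolding sq1 using sx s by (simp add: u_def field_simps)
  show "Phi (Psi (x, y)) = (x, y)"
    unfolding P Phi_eq using r1 r2 assms by (simp add: arccos_cos)
  show "g0 (Psi (x, y)) = exp (- pi * (sin x ^ 2 / sin (x + y) ^ 2))"
    unfolding P g0_def using n1 by (simp add: norm_Pair power_divide)
  show "Jac (x, y) > 0" using sx sy s by (simp add: Jac_def)
qed

lemma Phi_refl: "Phi (u, - v) = Phi (u, v)"
  by (simp add: Phi_eq)

lemma g0_refl: "g0 (u, - v) = g0 (u, v)"
  by (simp add: g0_def norm_Pair)


lemma G_half: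
  fixes G :: "real \<times> real \<Rightarrow> real"
  assumes Gm: "G \<in> borel_measurable borel" and Gn: "\<And>c. 0 \<le> G c"
    and Gs: "\<And>u v. G (u, - v) = G (u, v)"
  shows "(\<integral>\<^sup>+c. ennreal (G c) \<partial>lborel) = 2 * (\<integral>\<^sup>+c. ennreal (G c) * indicator {c. 0 < snd c} c \<partial>lborel)"
proof -
  have Gm2[measurable]: "G \<in> borel_measurable (borel \<Otimes>\<^sub>M borel)" using Gm by (simp add: borel_prod)
  have inner: "(\<integral>\<^sup>+v. ennreal (G (u, v)) \<partial>lborel) = 2 * (\<integral>\<^sup>+v. ennreal (G (u, v)) * indicator {0<..} v \<partial>lborel)"
    for u :: real
  proof -
    have "(\<integral>\<^sup>+v. ennreal (G (u, v)) \<partial>lborel) =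
          (\<integral>\<^sup>+v. ennreal (G (u, v)) * indicator {0<..} v + ennreal (G (u, v)) * indicator {..<0} v \<partial>lborel)"
    proof (rule nn_integral_cong_AE)
      show "AE v in lborel. ennreal (G (u, v)) = ennreal (G (u, v)) * indicator {0<..} v + ennreal (G (u, v)) * indicator {..<0} v"
        using AE_lborel_singleton[of 0] by eventually_elim (auto simp: indicator_def)
    qed
    also have "\<dots> = (\<integral>\<^sup>+v. ennreal (G (u, v)) * indicator {0<..} v \<partial>lborel) +
                     (\<integral>\<^sup>+v. ennreal (G (u, v)) * indicator {..<0} v \<partial>lborel)"
      by (rule nn_integral_add) measurable
    also have "(\<integral>\<^sup>+v. ennreal (G (u, v)) * indicator {..<0} v \<partial>lborel) =
               ennreal \<bar>-1\<bar> * (\<integral>\<^sup>+v. ennreal (G (u, 0 + (-1) * v)) * indicator {..<0} (0 + (-1) * v) \<partial>lborel)"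
      by (rule nn_integral_real_affine) measurable
    also have "\<dots> = (\<integral>\<^sup>+v. ennreal (G (u, v)) * indicator {0<..} v \<partial>lborel)"
      by (simp add: Gs indicator_def)
    finally show ?thesis by (simp add: mult_2)
  qed
  have "(\<integral>\<^sup>+c. ennreal (G c) \<partial>lborel) = (\<integral>\<^sup>+c. ennreal (G c) \<partial>(lborel \<Otimes>\<^sub>M lborel))"
    by (simp add: lborel_prod)
  also have "\<dots> = (\<integral>\<^sup>+u. \<integral>\<^sup>+v. ennreal (G (u, v)) \<partial>lborel \<partial>lborel)"
    by (rule lborel.nn_integral_fst[symmetric]) (rule lb2, measurable)
  also have "\<dots> = (\<integral>\<^sup>+u. 2 * (\<integral>\<^sup>+v. ennreal (G (u, v)) * indicator {0<..} v \<partial>lborel) \<partial>lborel)"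
    by (simp add: inner)
  also have "\<dots> = 2 * (\<integral>\<^sup>+u. \<integral>\<^sup>+v. ennreal (G (u, v)) * indicator {0<..} v \<partial>lborel \<partial>lborel)"
    by (rule nn_integral_cmult) measurable
  also have "(\<integral>\<^sup>+u. \<integral>\<^sup>+v. ennreal (G (u, v)) * indicator {0<..} v \<partial>lborel \<partial>lborel) =
             (\<integral>\<^sup>+u. \<integral>\<^sup>+v. ennreal (G (u, v)) * indicator {c. 0 < snd c} (u, v) \<partial>lborel \<partial>lborel)"
    by (simp add: indicator_def)
  also have "\<dots> = (\<integral>\<^sup>+c. ennreal (G c) * indicator {c. 0 < snd c} c \<partial>(lborel \<Otimes>\<^sub>M lborel))"
    by (rule lborel.nn_integral_fst) (rule lb2, measurable)
  also have "\<dots> = (\<integral>\<^sup>+c. ennreal (G c) * indicator {c. 0 < snd c} c \<partial>lborel)"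
    by (simp add: lborel_prod)
  finally show ?thesis .
qed

lemma push_integral:
  assumes A: "A \<in> sets borel"
  shows "(\<integral>\<^sup>+c. ennreal (g0 c) * indicator (Phi -` A) c \<partial>lborel) = (\<integral>\<^sup>+z. ennreal (fd z) * indicator A z \<partial>lborel)"
proof -
  define G where "G c = g0 c * indicator A (Phi c)" for c
  have Gm: "G \<in> borel_measurable borel"
    unfolding G_def g0_def using Phi_meas A by measurable
  have Gn: "0 \<le> G c" for c by (simp add: G_def g0_def)
  have Gs: "G (u, - v) = G (u, v)" for u v by (simp add: G_def Phi_refl g0_refl)
  have "(\<integral>\<^sup>+c. ennreal (g0 c) * indicator (Phi -` A) c \<partial>lborel) = (\<integral>\<^sup>+c. ennreal (G c) \<partial>lborel)"
    by (intro nn_integral_cong) (simp add: G_def indicator_def)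
  also have "\<dots> = 2 * (\<integral>\<^sup>+c. ennreal (G c) * indicator {c. 0 < snd c} c \<partial>lborel)"
    by (rule G_half[OF Gm Gn Gs])
  also have "\<dots> = 2 * (\<integral>\<^sup>+z. ennreal (G (Psi z) * Jac z) * indicator Tset z \<partial>lborel)"
    by (simp add: CV[OF Gm Gn])
  also have "\<dots> = (\<integral>\<^sup>+z. 2 * (ennreal (G (Psi z) * Jac z) * indicator Tset z) \<partial>lborel)"
  proof (rule nn_integral_cmult[symmetric])
    have "(\<lambda>z. G (Psi z) * Jac z) \<in> borel_measurable borel"
      unfolding Psi_def Jac_def using Gm by (simp add: borel_prod[symmetric]) measurable
    then show "(\<lambda>z. ennreal (G (Psi z) * Jac z) * indicator Tset z) \<in> borel_measurable lborel"
      unfolding Tset_def by (simp add: borel_prod[symmetric]) measurable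
  qed
  also have "\<dots> = (\<integral>\<^sup>+z. ennreal (fd z) * indicator A z \<partial>lborel)"
  proof (rule nn_integral_cong)
    fix z :: "real \<times> real"
    obtain x y where z: "z = (x, y)" by (cases z)
    show "2 * (ennreal (G (Psi z) * Jac z) * indicator Tset z) = ennreal (fd z) * indicator A z"
    proof (cases "z \<in> Tset")
      case True
      then have xy: "0 < x" "0 < y" "x + y < pi" using z by (auto simp: Tset_def)
      note P = Psi_props[OF xy]
      have e: "ennreal (2 * (G (Psi z) * Jac z)) = 2 * ennreal (G (Psi z) * Jac z)"
        by (subst ennreal_mult') auto
      have "2 * (G (Psi z) * Jac z) = fd z * indicator A z"
        using P xy z by (simp add: G_def fd_def Jac_def indicator_def)
      then have "2 * ennreal (G (Psi z) * Jac z) = ennreal (fd z * indicator A z)" using e by simp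
      also have "\<dots> = ennreal (fd z) * indicator A z" by (simp add: indicator_def)
      finally show ?thesis using True by simp
    next
      case False
      then have "fd z = 0" using z by (auto simp: Tset_def fd_def)
      then show ?thesis using False by simp
    qed
  qed
  finally show ?thesis .
qed

lemma push:
  "distr (density lborel (\<lambda>c. ennreal (g0 c))) lborel Phi = density lborel (\<lambda>z. ennreal (fd z))"
proof (rule measure_eqI)
  show "sets (distr (density lborel (\<lambda>c. ennreal (g0 c))) lborel Phi) = sets (density lborel (\<lambda>z. ennreal (fd z)))"
    by simp
  fix A assume "A \<in> sets (distr (density lborel (\<lambda>c. ennreal (g0 c))) lborel Phi)"
  then have A: "A \<in> sets borel" by simp
  have Pm: "Phi \<in> measurable (density lborel (\<lambda>c. ennreal (g0 c))) lborel"
    using Phi_meas by simp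
  have g0m: "(\<lambda>c. ennreal (g0 c)) \<in> borel_measurable lborel" unfolding g0_def by simp
  have fdm: "(\<lambda>c. ennreal (fd c)) \<in> borel_measurable lborel" using fd_meas by simp
  have "emeasure (distr (density lborel (\<lambda>c. ennreal (g0 c))) lborel Phi) A =
        emeasure (density lborel (\<lambda>c. ennreal (g0 c))) (Phi -` A \<inter> space (density lborel (\<lambda>c. ennreal (g0 c))))"
    using A Pm by (intro emeasure_distr) auto
  also have "\<dots> = (\<integral>\<^sup>+c. ennreal (g0 c) * indicator (Phi -` A) c \<partial>lborel)"
    using A Phi_meas g0m by (subst emeasure_density) (auto simp: measurable_sets_borel)
  also have "\<dots> = (\<integral>\<^sup>+z. ennreal (fd z) * indicator A z \<partial>lborel)"
    by (rule push_integral[OF A])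
  also have "\<dots> = emeasure (density lborel (\<lambda>z. ennreal (fd z))) A"
    using A fdm by (subst emeasure_density) auto
  finally show "emeasure (distr (density lborel (\<lambda>c. ennreal (g0 c))) lborel Phi) A = emeasure (density lborel (\<lambda>z. ennreal (fd z))) A" .
qed


definition nearE :: "(real \<times> real) set \<Rightarrow> bool" where
  "nearE P \<longleftrightarrow> (\<exists>!c. c \<in> P \<and> (\<forall>p\<in>P. norm c \<le> norm p))"

lemma nearest_eq:
  assumes "c \<in> P" "\<forall>p\<in>P. norm c \<le> norm p" "\<And>c'. c' \<in> P \<Longrightarrow> norm c' \<le> norm c \<Longrightarrow> c' = c"
  shows "nearE P" "nearest_to_origin P = c"
proof -
  have ex: "\<exists>!c. c \<in> P \<and> (\<forall>p\<in>P. norm c \<le> norm p)"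
  proof (rule ex1I[of _ c])
    show "c \<in> P \<and> (\<forall>p\<in>P. norm c \<le> norm p)" using assms by blast
    fix c' assume "c' \<in> P \<and> (\<forall>p\<in>P. norm c' \<le> norm p)"
    then show "c' = c" using assms by blast
  qed
  then show "nearE P" unfolding nearE_def .
  have "(THE c. c \<in> P \<and> (\<forall>p\<in>P. norm c \<le> norm p)) = c"
  proof (rule the_equality)
    show "c \<in> P \<and> (\<forall>p\<in>P. norm c \<le> norm p)" using assms by blast
    fix c' assume "c' \<in> P \<and> (\<forall>p\<in>P. norm c' \<le> norm p)"
    then show "c' = c" using assms by blast
  qed
  then show "nearest_to_origin P = c" using ex unfolding nearest_to_origin_def by simp
qed

lemma nearest_props:
  assumes "nearE P"
  shows "nearest_to_origin P \<in> P" "\<And>p. p \<in> P \<Longrightarrow> norm (nearest_to_origin P) \<le> norm p"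
    "\<And>c'. c' \<in> P \<Longrightarrow> norm c' \<le> norm (nearest_to_origin P) \<Longrightarrow> c' = nearest_to_origin P"
proof -
  have ex: "\<exists>!c. c \<in> P \<and> (\<forall>p\<in>P. norm c \<le> norm p)" using assms unfolding nearE_def .
  then obtain c where c: "c \<in> P" "\<forall>p\<in>P. norm c \<le> norm p"
    and u: "\<And>c'. c' \<in> P \<and> (\<forall>p\<in>P. norm c' \<le> norm p) \<Longrightarrow> c' = c" by blast
  have u2: "\<And>c'. c' \<in> P \<Longrightarrow> norm c' \<le> norm c \<Longrightarrow> c' = c"
  proof -
    fix c' assume "c' \<in> P" "norm c' \<le> norm c"
    then have "\<forall>p\<in>P. norm c' \<le> norm p" using c by force
    then show "c' = c" using u \<open>c' \<in> P\<close> by blast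
  qed
  have "nearest_to_origin P = c" by (rule nearest_eq(2)[OF c u2])
  then show "nearest_to_origin P \<in> P" "\<And>p. p \<in> P \<Longrightarrow> norm (nearest_to_origin P) \<le> norm p"
    "\<And>c'. c' \<in> P \<Longrightarrow> norm c' \<le> norm (nearest_to_origin P) \<Longrightarrow> c' = nearest_to_origin P"
    using c u2 by auto
qed

lemma ES_char1:
  assumes a: "card (P \<inter> cball 0 q) = 1" and b: "card (P \<inter> (cball 0 q \<inter> U)) = 1"
  shows "nearE P \<and> nearest_to_origin P \<in> U"
proof -
  obtain c where c: "P \<inter> cball 0 q = {c}" using a by (rule card_1_singletonE)
  have sub: "P \<inter> (cball 0 q \<inter> U) \<subseteq> {c}" using c by blast
  have ne: "P \<inter> (cball 0 q \<inter> U) \<noteq> {}" using b by (metis card.empty zero_neq_one)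
  have cU: "c \<in> U" using sub ne by blast
  have cP: "c \<in> P" and cq: "norm c \<le> q" using c by auto
  have min: "\<forall>p\<in>P. norm c \<le> norm p"
  proof
    fix p assume p: "p \<in> P"
    show "norm c \<le> norm p"
    proof (cases "norm p \<le> q")
      case True then have "p \<in> P \<inter> cball 0 q" using p by (simp add: dist_norm)
      then show ?thesis using c by auto
    next
      case False then show ?thesis using cq by simp
    qed
  qed
  have uq: "\<And>c'. c' \<in> P \<Longrightarrow> norm c' \<le> norm c \<Longrightarrow> c' = c"
  proof -
    fix c' assume "c' \<in> P" "norm c' \<le> norm c"
    then have "c' \<in> P \<inter> cball 0 q" using cq by (simp add: dist_norm)
    then show "c' = c" using c by auto
  qed
  show ?thesis using nearest_eq[OF cP min uq] cU by simp
qed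

lemma ES_char2:
  assumes fin: "\<And>B. bounded B \<Longrightarrow> finite (P \<inter> B)" and E: "nearE P" and U: "nearest_to_origin P \<in> U"
  shows "\<exists>q\<in>\<rat>. card (P \<inter> cball 0 q) = 1 \<and> card (P \<inter> (cball 0 q \<inter> U)) = 1"
proof -
  define c where "c = nearest_to_origin P"
  note np = nearest_props[OF E, folded c_def]
  define F where "F = P \<inter> cball 0 (norm c + 1)"
  have finF: "finite F" unfolding F_def by (rule fin) simp
  define r2 where "r2 = Min (insert (norm c + 1) (norm ` (F - {c})))"
  have r2_gt: "norm c < r2"
    unfolding r2_def using finF
  proof (subst Min_gr_iff)
    show "finite (insert (norm c + 1) (norm ` (F - {c})))" using finF by simp
    show "insert (norm c + 1) (norm ` (F - {c})) \<noteq> {}" by simp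
    show "\<forall>a\<in>insert (norm c + 1) (norm ` (F - {c})). norm c < a"
    proof
      fix a assume "a \<in> insert (norm c + 1) (norm ` (F - {c}))"
      then consider "a = norm c + 1" | p where "p \<in> F" "p \<noteq> c" "a = norm p" by auto
      then show "norm c < a"
      proof cases
        case 1 then show ?thesis by simp
      next
        case 2
        have "p \<in> P" using 2 unfolding F_def by simp
        then have "norm c \<le> norm p" using np(2) by simp
        moreover have "norm p \<noteq> norm c" using np(3)[of p] 2 \<open>p \<in> P\<close> by force
        ultimately show ?thesis using 2 by simp
      qed
    qed
  qed
  have r2_le: "r2 \<le> norm c + 1" unfolding r2_def using finF by (intro Min_le) auto
  have r2_le2: "\<And>p. p \<in> F \<Longrightarrow> p \<noteq> c \<Longrightarrow> r2 \<le> norm p" unfolding r2_def using finF by (intro Min_le) auto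
  obtain q where q: "q \<in> \<rat>" "norm c < q" "q < r2" using Rats_dense_in_real[OF r2_gt] by blast
  have eq: "P \<inter> cball 0 q = {c}"
  proof
    show "{c} \<subseteq> P \<inter> cball 0 q" using np(1) q by (simp add: dist_norm)
    show "P \<inter> cball 0 q \<subseteq> {c}"
    proof
      fix p assume p: "p \<in> P \<inter> cball 0 q"
      then have "norm p \<le> q" by (simp add: dist_norm)
      then have pF: "p \<in> F" using p q r2_le unfolding F_def by (simp add: dist_norm)
      show "p \<in> {c}"
      proof (rule ccontr)
        assume "p \<notin> {c}"
        then have "r2 \<le> norm p" using r2_le2[OF pF] by simp
        then show False using \<open>norm p \<le> q\<close> q by simp
      qed
    qed
  qed
  have eq2: "P \<inter> (cball 0 q \<inter> U) = {c}" using eq U unfolding c_def[symmetric] by blast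
  show ?thesis using q(1) eq eq2 by (intro bexI[of _ q]) auto
qed


lemma nearest_notE: "\<not> nearE P \<Longrightarrow> nearest_to_origin P = (0, 0)"
  unfolding nearest_to_origin_def nearE_def by simp

context
  fixes M :: "'w measure" and Pts :: "'w \<Rightarrow> (real \<times> real) set"
  assumes PPP: "unit_poisson_point_process M Pts"
begin

lemma ps: "prob_space M" using PPP unfolding unit_poisson_point_process_def by blast

lemma fin: "\<omega> \<in> space M \<Longrightarrow> bounded B \<Longrightarrow> finite (Pts \<omega> \<inter> B)"
  using PPP unfolding unit_poisson_point_process_def by blast

lemma cnt_meas: "B \<in> sets borel \<Longrightarrow> bounded B \<Longrightarrow> (\<lambda>\<omega>. card (Pts \<omega> \<inter> B)) \<in> measurable M (count_space UNIV)"
  using PPP unfolding unit_poisson_point_process_def by simp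

lemma cnt_set: "B \<in> sets borel \<Longrightarrow> bounded B \<Longrightarrow> {\<omega> \<in> space M. Q (card (Pts \<omega> \<inter> B))} \<in> sets M"
proof -
  assume B: "B \<in> sets borel" "bounded B"
  have "{\<omega> \<in> space M. Q (card (Pts \<omega> \<inter> B))} = (\<lambda>\<omega>. card (Pts \<omega> \<inter> B)) -` {n. Q n} \<inter> space M" by auto
  also have "\<dots> \<in> sets M" using cnt_meas[OF B] by (rule measurable_sets) simp
  finally show ?thesis .
qed

lemma cnt_prob: "B \<in> sets borel \<Longrightarrow> bounded B \<Longrightarrow>
   measure M {\<omega> \<in> space M. card (Pts \<omega> \<inter> B) = k} = measure lborel B ^ k / fact k * exp (- measure lborel B)"
  using PPP unfolding unit_poisson_point_process_def by simp

lemma cnt_prob0: "B \<in> sets borel \<Longrightarrow> bounded B \<Longrightarrow>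
   measure M {\<omega> \<in> space M. card (Pts \<omega> \<inter> B) = 0} = exp (- measure lborel B)"
  using cnt_prob[of B 0] by simp

lemma cnt_prob_ne0: "B \<in> sets borel \<Longrightarrow> bounded B \<Longrightarrow>
   measure M {\<omega> \<in> space M. card (Pts \<omega> \<inter> B) \<noteq> 0} = 1 - exp (- measure lborel B)"
proof -
  assume B: "B \<in> sets borel" "bounded B"
  interpret prob_space M by (rule ps)
  have "{\<omega> \<in> space M. card (Pts \<omega> \<inter> B) \<noteq> 0} = space M - {\<omega> \<in> space M. card (Pts \<omega> \<inter> B) = 0}" by auto
  then have "measure M {\<omega> \<in> space M. card (Pts \<omega> \<inter> B) \<noteq> 0} = 1 - measure M {\<omega> \<in> space M. card (Pts \<omega> \<inter> B) = 0}"
    using prob_compl[OF cnt_set[OF B, of "\<lambda>n. n = 0"]] by simp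
  then show ?thesis using cnt_prob0[OF B] by simp
qed

lemma indep2:
  assumes B1: "B1 \<in> sets borel" "bounded B1" and B2: "B2 \<in> sets borel" "bounded B2" and D: "B1 \<inter> B2 = {}"
  shows "measure M {\<omega> \<in> space M. card (Pts \<omega> \<inter> B1) = 0 \<and> card (Pts \<omega> \<inter> B2) \<noteq> 0}
       = exp (- measure lborel B1) * (1 - exp (- measure lborel B2))"
proof -
  interpret prob_space M by (rule ps)
  define Bs where "Bs i = (if i = (0::nat) then B1 else B2)" for i
  define A where "A i = (if i = (0::nat) then {0::nat} else - {0})" for i
  have ind0: "\<forall>(I :: nat set) (Bs :: nat \<Rightarrow> (real \<times> real) set).
        finite I \<longrightarrow> disjoint_family_on Bs I \<longrightarrow>
        (\<forall>i\<in>I. Bs i \<in> sets lborel \<and> bounded (Bs i)) \<longrightarrow>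
        indep_vars (\<lambda>_. count_space UNIV) (\<lambda>i \<omega>. card (Pts \<omega> \<inter> Bs i)) I"
    using PPP unfolding unit_poisson_point_process_def by blast
  have dj: "disjoint_family_on Bs {0, 1}"
    unfolding disjoint_family_on_def Bs_def using D by auto
  have ind: "indep_vars (\<lambda>_. count_space UNIV) (\<lambda>i \<omega>. card (Pts \<omega> \<inter> Bs i)) {0, 1}"
    using ind0 dj B1 B2 unfolding Bs_def by auto
  have "prob (\<Inter>i\<in>{0,1}. (\<lambda>\<omega>. card (Pts \<omega> \<inter> Bs i)) -` A i \<inter> space M)
      = (\<Prod>i\<in>{0,1}. prob ((\<lambda>\<omega>. card (Pts \<omega> \<inter> Bs i)) -` A i \<inter> space M))"
    by (rule indep_varsD[OF ind]) auto
  moreover have "(\<Inter>i\<in>{0::nat,1}. (\<lambda>\<omega>. card (Pts \<omega> \<inter> Bs i)) -` A i \<inter> space M)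
      = {\<omega> \<in> space M. card (Pts \<omega> \<inter> B1) = 0 \<and> card (Pts \<omega> \<inter> B2) \<noteq> 0}"
    by (auto simp: A_def Bs_def)
  moreover have "(\<lambda>\<omega>. card (Pts \<omega> \<inter> Bs 0)) -` A 0 \<inter> space M = {\<omega> \<in> space M. card (Pts \<omega> \<inter> B1) = 0}"
    by (auto simp: A_def Bs_def)
  moreover have "(\<lambda>\<omega>. card (Pts \<omega> \<inter> Bs 1)) -` A 1 \<inter> space M = {\<omega> \<in> space M. card (Pts \<omega> \<inter> B2) \<noteq> 0}"
    by (auto simp: A_def Bs_def)
  ultimately show ?thesis using cnt_prob0[OF B1] cnt_prob_ne0[OF B2] by simp
qed

lemma ES_meas:
  assumes U: "U \<in> sets borel"
  shows "{\<omega> \<in> space M. nearE (Pts \<omega>) \<and> nearest_to_origin (Pts \<omega>) \<in> U} \<in> sets M"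
proof -
  have "{\<omega> \<in> space M. nearE (Pts \<omega>) \<and> nearest_to_origin (Pts \<omega>) \<in> U} =
     (\<Union>q\<in>\<rat>. {\<omega> \<in> space M. card (Pts \<omega> \<inter> cball 0 q) = 1} \<inter> {\<omega> \<in> space M. card (Pts \<omega> \<inter> (cball 0 q \<inter> U)) = 1})"
  proof
    show "{\<omega> \<in> space M. nearE (Pts \<omega>) \<and> nearest_to_origin (Pts \<omega>) \<in> U} \<subseteq> (\<Union>q\<in>\<rat>. {\<omega> \<in> space M. card (Pts \<omega> \<inter> cball 0 q) = 1} \<inter> {\<omega> \<in> space M. card (Pts \<omega> \<inter> (cball 0 q \<inter> U)) = 1})"
    proof
      fix \<omega> assume w: "\<omega> \<in> {\<omega> \<in> space M. nearE (Pts \<omega>) \<and> nearest_to_origin (Pts \<omega>) \<in> U}"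
      then have "\<exists>q\<in>\<rat>. card (Pts \<omega> \<inter> cball 0 q) = 1 \<and> card (Pts \<omega> \<inter> (cball 0 q \<inter> U)) = 1"
        by (intro ES_char2) (auto intro: fin)
      then show "\<omega> \<in> (\<Union>q\<in>\<rat>. {\<omega> \<in> space M. card (Pts \<omega> \<inter> cball 0 q) = 1} \<inter> {\<omega> \<in> space M. card (Pts \<omega> \<inter> (cball 0 q \<inter> U)) = 1})"
        using w by auto
    qed
    show "(\<Union>q\<in>\<rat>. {\<omega> \<in> space M. card (Pts \<omega> \<inter> cball 0 q) = 1} \<inter> {\<omega> \<in> space M. card (Pts \<omega> \<inter> (cball 0 q \<inter> U)) = 1})
       \<subseteq> {\<omega> \<in> space M. nearE (Pts \<omega>) \<and> nearest_to_origin (Pts \<omega>) \<in> U}"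
      using ES_char1 by blast
  qed
  also have "\<dots> \<in> sets M"
  proof (rule sets.countable_UN''[OF countable_rat])
    fix q :: real
    have b1: "cball (0::real\<times>real) q \<in> sets borel" "bounded (cball (0::real\<times>real) q)" by auto
    have b2: "cball (0::real\<times>real) q \<inter> U \<in> sets borel" "bounded (cball (0::real\<times>real) q \<inter> U)"
      using U by auto
    show "{\<omega> \<in> space M. card (Pts \<omega> \<inter> cball 0 q) = 1} \<inter> {\<omega> \<in> space M. card (Pts \<omega> \<inter> (cball 0 q \<inter> U)) = 1} \<in> sets M"
      using cnt_set[OF b1, of "\<lambda>n. n = 1"] cnt_set[OF b2, of "\<lambda>n. n = 1"] by auto
  qed
  finally show ?thesis .
qed

lemma C_meas: "(\<lambda>\<omega>. nearest_to_origin (Pts \<omega>)) \<in> measurable M borel"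
proof (rule measurableI)
  fix A :: "(real \<times> real) set" assume A: "A \<in> sets borel"
  have "(\<lambda>\<omega>. nearest_to_origin (Pts \<omega>)) -` A \<inter> space M =
      {\<omega> \<in> space M. nearE (Pts \<omega>) \<and> nearest_to_origin (Pts \<omega>) \<in> A} \<union>
      (if (0, 0) \<in> A then space M - {\<omega> \<in> space M. nearE (Pts \<omega>) \<and> nearest_to_origin (Pts \<omega>) \<in> UNIV} else {})"
  proof (rule set_eqI)
    fix \<omega> show "\<omega> \<in> (\<lambda>\<omega>. nearest_to_origin (Pts \<omega>)) -` A \<inter> space M \<longleftrightarrow> \<omega> \<in> {\<omega> \<in> space M. nearE (Pts \<omega>) \<and> nearest_to_origin (Pts \<omega>) \<in> A} \<union>
      (if (0, 0) \<in> A then space M - {\<omega> \<in> space M. nearE (Pts \<omega>) \<and> nearest_to_origin (Pts \<omega>) \<in> UNIV} else {})"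
      using nearest_notE[of "Pts \<omega>"] by (cases "nearE (Pts \<omega>)") auto
  qed
  also have "\<dots> \<in> sets M" using ES_meas[OF A] ES_meas[of UNIV] by auto
  finally show "(\<lambda>\<omega>. nearest_to_origin (Pts \<omega>)) -` A \<inter> space M \<in> sets M" .
qed simp

end

definition bsq :: "real \<Rightarrow> (real \<times> real) set" where "bsq r = {c. (norm c)^2 < r}"
definition ann :: "real \<Rightarrow> nat \<Rightarrow> (real \<times> real) set" where
  "ann h k = {c. real k * h \<le> (norm c)^2 \<and> (norm c)^2 < real (Suc k) * h}"

lemma bsq_ball: "bsq r = (if 0 \<le> r then ball 0 (sqrt r) else {})"
proof (cases "0 \<le> r")
  case True
  have "(norm c)^2 < r \<longleftrightarrow> norm c < sqrt r" for c :: "real \<times> real"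
  proof
    assume "(norm c)^2 < r"
    then have "sqrt ((norm c)^2) < sqrt r" by (rule real_sqrt_less_mono)
    then show "norm c < sqrt r" by simp
  next
    assume a: "norm c < sqrt r"
    have "(norm c)^2 < (sqrt r)^2" using a by (intro power_strict_mono) auto
    then show "(norm c)^2 < r" using True by simp
  qed
  then show ?thesis using True by (auto simp: bsq_def dist_0_norm)
next
  case False
  have "\<And>c::real\<times>real. \<not> (norm c)^2 < r"
  proof -
    fix c :: "real \<times> real"
    have "0 \<le> (norm c)^2" by simp
    then show "\<not> (norm c)^2 < r" using False by linarith
  qed
  then show ?thesis using False unfolding bsq_def by auto
qed

lemma bsq_sets: "bsq r \<in> sets borel" "bounded (bsq r)"
  unfolding bsq_ball by auto

lemma vol_bsq: "0 \<le> r \<Longrightarrow> emeasure lborel (bsq r) = ennreal (pi * r)"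
proof -
  assume r: "0 \<le> r"
  have "emeasure lborel (bsq r) = emeasure lborel (ball (0::real \<times> real) (sqrt r))"
    using r by (simp add: bsq_ball)
  also have "\<dots> = ennreal (unit_ball_vol (real DIM(real \<times> real)) * sqrt r ^ DIM(real \<times> real))"
    using r by (intro emeasure_ball) simp
  also have "\<dots> = ennreal (pi * r)" using r by (simp add: unit_ball_vol_2)
  finally show ?thesis .
qed

lemma mvol_bsq: "0 \<le> r \<Longrightarrow> measure lborel (bsq r) = pi * r"
  using vol_bsq by (simp add: measure_def)

lemma ann_eq: "0 \<le> h \<Longrightarrow> ann h k = bsq (real (Suc k) * h) - bsq (real k * h)"
  unfolding ann_def bsq_def by auto

lemma ann_sets: "0 \<le> h \<Longrightarrow> ann h k \<in> sets borel" "0 \<le> h \<Longrightarrow> bounded (ann h k)"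
  using bsq_sets by (auto simp: ann_eq intro: bounded_subset[of "bsq (real (Suc k) * h)"])

lemma mvol_ann: "0 \<le> h \<Longrightarrow> measure lborel (ann h k) = pi * h"
proof -
  assume h: "0 \<le> h"
  have kk: "real k * h \<le> real (Suc k) * h" using h by (intro mult_right_mono) auto
  have sub: "bsq (real k * h) \<subseteq> bsq (real (Suc k) * h)"
    unfolding bsq_def using kk by auto
  have "measure lborel (ann h k) = measure lborel (bsq (real (Suc k) * h)) - measure lborel (bsq (real k * h))"
    unfolding ann_eq[OF h] using sub bsq_sets vol_bsq h by (intro measure_Diff) auto
  also have "\<dots> = pi * h" using h by (simp add: mvol_bsq algebra_simps)
  finally show ?thesis .
qed

lemma ann_cover: "0 < h \<Longrightarrow> c \<in> ann h (nat \<lfloor>(norm c)^2 / h\<rfloor>)"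
proof -
  assume h: "0 < h"
  define x where "x = (norm c)^2 / h"
  have x0: "0 \<le> x" unfolding x_def using h by simp
  have fl: "real (nat \<lfloor>x\<rfloor>) = of_int \<lfloor>x\<rfloor>" using x0 by simp
  have a: "real (nat \<lfloor>x\<rfloor>) \<le> x" using fl by simp
  have b: "x < real (Suc (nat \<lfloor>x\<rfloor>))" using fl by linarith
  have xh: "x * h = (norm c)^2" unfolding x_def using h by simp
  have "real (nat \<lfloor>x\<rfloor>) * h \<le> x * h" using a h by (intro mult_right_mono) auto
  moreover have "x * h < real (Suc (nat \<lfloor>x\<rfloor>)) * h" using b h by (intro mult_strict_right_mono) auto
  ultimately have "real (nat \<lfloor>x\<rfloor>) * h \<le> (norm c)^2" "(norm c)^2 < real (Suc (nat \<lfloor>x\<rfloor>)) * h"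
    unfolding xh by auto
  then show ?thesis unfolding ann_def x_def by simp
qed

lemma exp_bound2: "0 \<le> (x::real) \<Longrightarrow> 1 - exp (- x) - x * exp (- x) \<le> x^2"
proof -
  assume x: "0 \<le> x"
  have "1 - x \<le> exp (- x)" using exp_ge_add_one_self[of "- x"] by simp
  then have "(1 - x) * (1 + x) \<le> exp (- x) * (1 + x)" using x by (intro mult_right_mono) auto
  then show ?thesis by (simp add: algebra_simps power2_eq_square)
qed


context
  fixes M :: "'w measure" and Pts :: "'w \<Rightarrow> (real \<times> real) set"
  assumes PPP: "unit_poisson_point_process M Pts"
begin

lemma E_sets: "{\<omega> \<in> space M. nearE (Pts \<omega>)} \<in> sets M"
  using ES_meas[OF PPP, of UNIV] by simp

lemma prob_ge2:
  assumes h: "0 \<le> h"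
  shows "measure M {\<omega> \<in> space M. 2 \<le> card (Pts \<omega> \<inter> ann h k)} \<le> (pi * h)^2"
proof -
  interpret prob_space M by (rule ps[OF PPP])
  define B where "B = ann h k"
  have B: "B \<in> sets borel" "bounded B" using ann_sets[OF h] unfolding B_def by auto
  have x: "measure lborel B = pi * h" unfolding B_def by (rule mvol_ann[OF h])
  define S0 where "S0 = {\<omega> \<in> space M. card (Pts \<omega> \<inter> B) = 0}"
  define S1 where "S1 = {\<omega> \<in> space M. card (Pts \<omega> \<inter> B) = 1}"
  have S0: "S0 \<in> sets M" unfolding S0_def by (rule cnt_set[OF PPP B])
  have S1: "S1 \<in> sets M" unfolding S1_def by (rule cnt_set[OF PPP B])
  have p0: "prob S0 = exp (- (pi * h))" unfolding S0_def using cnt_prob0[OF PPP B] x by simp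
  have p1: "prob S1 = pi * h * exp (- (pi * h))" unfolding S1_def using cnt_prob[OF PPP B, of 1] x by simp
  have "{\<omega> \<in> space M. 2 \<le> card (Pts \<omega> \<inter> B)} = space M - (S0 \<union> S1)"
    unfolding S0_def S1_def by auto
  then have "prob {\<omega> \<in> space M. 2 \<le> card (Pts \<omega> \<inter> B)} = 1 - prob (S0 \<union> S1)"
    using prob_compl[of "S0 \<union> S1"] S0 S1 by auto
  also have "prob (S0 \<union> S1) = prob S0 + prob S1"
    using S0 S1 by (intro finite_measure_Union) (auto simp: S0_def S1_def)
  finally have "prob {\<omega> \<in> space M. 2 \<le> card (Pts \<omega> \<inter> B)} = 1 - exp (- (pi * h)) - pi * h * exp (- (pi * h))"
    using p0 p1 by simp
  also have "\<dots> \<le> (pi * h)^2" using h by (intro exp_bound2) simp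
  finally show ?thesis unfolding B_def .
qed

lemma notE_subset:
  assumes h: "0 < h"
  shows "space M - {\<omega> \<in> space M. nearE (Pts \<omega>)} \<subseteq>
     {\<omega> \<in> space M. card (Pts \<omega> \<inter> bsq (real K * h)) = 0} \<union> (\<Union>k<K. {\<omega> \<in> space M. 2 \<le> card (Pts \<omega> \<inter> ann h k)})"
proof
  fix \<omega> assume w: "\<omega> \<in> space M - {\<omega> \<in> space M. nearE (Pts \<omega>)}"
  then have wM: "\<omega> \<in> space M" and nE: "\<not> nearE (Pts \<omega>)" by auto
  show "\<omega> \<in> {\<omega> \<in> space M. card (Pts \<omega> \<inter> bsq (real K * h)) = 0} \<union> (\<Union>k<K. {\<omega> \<in> space M. 2 \<le> card (Pts \<omega> \<inter> ann h k)})"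
  proof (cases "card (Pts \<omega> \<inter> bsq (real K * h)) = 0")
    case True then show ?thesis using wM by simp
  next
    case False
    define F where "F = Pts \<omega> \<inter> bsq (real K * h)"
    have finF: "finite F" unfolding F_def using fin[OF PPP wM bsq_sets(2)] .
    have neF: "F \<noteq> {}" using False unfolding F_def by auto
    define m where "m = Min (norm ` F)"
    have "m \<in> norm ` F" unfolding m_def using finF neF by (intro Min_in) auto
    then obtain c where cF: "c \<in> F" and cm: "norm c = m" by auto
    have mle: "\<And>p. p \<in> F \<Longrightarrow> m \<le> norm p" unfolding m_def using finF by (intro Min_le) auto
    have cP: "c \<in> Pts \<omega>" using cF unfolding F_def by simp
    have cK: "(norm c)^2 < real K * h" using cF unfolding F_def bsq_def by simp
    have cmin: "\<forall>p\<in>Pts \<omega>. norm c \<le> norm p"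
    proof
      fix p assume p: "p \<in> Pts \<omega>"
      show "norm c \<le> norm p"
      proof (cases "p \<in> bsq (real K * h)")
        case True then show ?thesis using mle[of p] p cm unfolding F_def by simp
      next
        case False
        have a: "(norm c)^2 < (norm p)^2" using False cK unfolding bsq_def by simp
        have "norm c < norm p" using a by (rule power_less_imp_less_base) simp
        then show ?thesis by simp
      qed
    qed
    obtain c' where c'P: "c' \<in> Pts \<omega>" and c'min: "\<forall>p\<in>Pts \<omega>. norm c' \<le> norm p" and cc': "c' \<noteq> c"
    proof -
      have "\<not> (\<forall>c'. c' \<in> Pts \<omega> \<and> (\<forall>p\<in>Pts \<omega>. norm c' \<le> norm p) \<longrightarrow> c' = c)"
      proof
        assume a: "\<forall>c'. c' \<in> Pts \<omega> \<and> (\<forall>p\<in>Pts \<omega>. norm c' \<le> norm p) \<longrightarrow> c' = c"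
        have "\<exists>!c. c \<in> Pts \<omega> \<and> (\<forall>p\<in>Pts \<omega>. norm c \<le> norm p)"
          using cP cmin a by (intro ex1I[of _ c]) auto
        then show False using nE unfolding nearE_def by simp
      qed
      then show ?thesis using that by blast
    qed
    have nn: "norm c' = norm c" using cmin c'min cP c'P by force
    define k where "k = nat \<lfloor>(norm c)^2 / h\<rfloor>"
    have ck: "c \<in> ann h k" unfolding k_def by (rule ann_cover[OF h])
    have c'k: "c' \<in> ann h k" unfolding k_def using ann_cover[OF h, of c'] nn by simp
    have "real k * h < real K * h" using ck cK unfolding ann_def by simp
    then have kK: "k < K" using h by simp
    have fin2: "finite (Pts \<omega> \<inter> ann h k)" using fin[OF PPP wM ann_sets(2)] h by simp
    have "{c, c'} \<subseteq> Pts \<omega> \<inter> ann h k" using ck c'k cP c'P by auto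
    then have "card {c, c'} \<le> card (Pts \<omega> \<inter> ann h k)" using fin2 by (rule card_mono[rotated])
    then have "2 \<le> card (Pts \<omega> \<inter> ann h k)" using cc' by simp
    then show ?thesis using wM kK by blast
  qed
qed

lemma PE: "measure M {\<omega> \<in> space M. nearE (Pts \<omega>)} = 1"
proof -
  interpret prob_space M by (rule ps[OF PPP])
  define Ec where "Ec = space M - {\<omega> \<in> space M. nearE (Pts \<omega>)}"
  have Ecs: "Ec \<in> sets M" unfolding Ec_def using E_sets by auto
  have bnd: "prob Ec \<le> (1 + pi^2) / real n" if n: "0 < n" for n :: nat
  proof -
    define h where "h = 1 / (real n)^2"
    define K where "K = n^3"
    have h0: "0 < h" unfolding h_def using n by simp
    have Kh: "real K * h = real n" unfolding K_def h_def using n by (simp add: power2_eq_square power3_eq_cube)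
    have Bs: "bsq (real K * h) \<in> sets borel" "bounded (bsq (real K * h))" by (rule bsq_sets)+
    have sA: "\<And>k. {\<omega> \<in> space M. 2 \<le> card (Pts \<omega> \<inter> ann h k)} \<in> sets M"
      using cnt_set[OF PPP ann_sets[of h]] h0 by simp
    have s0: "{\<omega> \<in> space M. card (Pts \<omega> \<inter> bsq (real K * h)) = 0} \<in> sets M"
      by (rule cnt_set[OF PPP Bs])
    have "prob Ec \<le> prob ({\<omega> \<in> space M. card (Pts \<omega> \<inter> bsq (real K * h)) = 0} \<union> (\<Union>k<K. {\<omega> \<in> space M. 2 \<le> card (Pts \<omega> \<inter> ann h k)}))"
      unfolding Ec_def using notE_subset[OF h0, of K] s0 sA
      by (intro finite_measure_mono) auto
    also have "\<dots> \<le> prob {\<omega> \<in> space M. card (Pts \<omega> \<inter> bsq (real K * h)) = 0} + prob (\<Union>k<K. {\<omega> \<in> space M. 2 \<le> card (Pts \<omega> \<inter> ann h k)})"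
      using s0 sA by (intro measure_Un_le) auto
    also have "prob (\<Union>k<K. {\<omega> \<in> space M. 2 \<le> card (Pts \<omega> \<inter> ann h k)}) \<le> (\<Sum>k<K. prob {\<omega> \<in> space M. 2 \<le> card (Pts \<omega> \<inter> ann h k)})"
      using sA by (intro measure_UNION_le) auto
    also have "\<dots> \<le> (\<Sum>k<K. (pi * h)^2)"
      using h0 by (intro sum_mono prob_ge2) auto
    also have "prob {\<omega> \<in> space M. card (Pts \<omega> \<inter> bsq (real K * h)) = 0} = exp (- (pi * (real K * h)))"
      using cnt_prob0[OF PPP Bs] mvol_bsq[of "real K * h"] h0 by simp
    finally have "prob Ec \<le> exp (- (pi * real n)) + real K * (pi * h)^2" using Kh by simp
    also have "real K * (pi * h)^2 = pi^2 / real n"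
      unfolding K_def h_def using n by (simp add: power2_eq_square power3_eq_cube field_simps)
    also have "exp (- (pi * real n)) \<le> 1 / real n"
    proof -
      have "1 * real n \<le> pi * real n" using pi_ge_two by (intro mult_right_mono) auto
      then have "real n \<le> 1 + pi * real n" by simp
      also have "\<dots> \<le> exp (pi * real n)" by (rule exp_ge_add_one_self)
      finally have "real n \<le> exp (pi * real n)" .
      then have "1 / exp (pi * real n) \<le> 1 / real n" using n by (intro divide_left_mono) auto
      then show ?thesis by (simp add: exp_minus field_simps)
    qed
    finally show ?thesis by (simp add: add_divide_distrib)
  qed
  have "prob Ec \<le> 0"
  proof (rule ccontr)
    assume "\<not> prob Ec \<le> 0"
    then have p: "0 < prob Ec" by simp
    obtain n :: nat where nn: "(1 + pi^2) / prob Ec < real n" using reals_Archimedean2 by blast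
    have n0: "0 < n" using nn p by (metis divide_pos_pos gr0I of_nat_0 pi_gt_zero add_pos_pos less_asym zero_less_one zero_less_power)
    have "(1 + pi^2) < real n * prob Ec" using nn p by (simp add: field_simps)
    then have "(1 + pi^2) / real n < prob Ec" using n0 by (simp add: field_simps)
    then show False using bnd[OF n0] by simp
  qed
  then have "prob Ec = 0" using measure_nonneg[of M Ec] by simp
  then show ?thesis using prob_compl[OF E_sets] unfolding Ec_def by simp
qed

end

lemma gauss1: "(\<integral>\<^sup>+x. ennreal (exp (- pi * x^2)) \<partial>lborel) = 1"
proof -
  define \<sigma> where "\<sigma> = 1 / sqrt (2 * pi)"
  have s2: "\<sigma>^2 = 1 / (2 * pi)" unfolding \<sigma>_def by (simp add: power_divide)
  have sp: "0 < \<sigma>" unfolding \<sigma>_def using pi_gt_zero by simp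
  have nd: "normal_density 0 \<sigma> x = exp (- pi * x^2)" for x
    unfolding normal_density_def s2 using sp by (simp add: field_simps)
  interpret prob_space "density lborel (normal_density 0 \<sigma>)" using sp by (intro prob_space_normal_density)
  have "1 = emeasure (density lborel (normal_density 0 \<sigma>)) (space (density lborel (normal_density 0 \<sigma>)))"
    by (rule emeasure_space_1[symmetric])
  also have "\<dots> = (\<integral>\<^sup>+x. ennreal (normal_density 0 \<sigma> x) \<partial>lborel)"
    by (subst emeasure_density) auto
  finally show ?thesis unfolding nd by simp
qed

lemma g0_alt: "g0 c = exp (- pi * ((fst c)^2 + (snd c)^2))"
  by (cases c) (simp add: g0_def norm_Pair)

lemma gauss2: "(\<integral>\<^sup>+c. ennreal (g0 c) \<partial>lborel) = 1"
proof -
  have "(\<integral>\<^sup>+c. ennreal (g0 c) \<partial>lborel) = (\<integral>\<^sup>+c. ennreal (g0 c) \<partial>(lborel \<Otimes>\<^sub>M lborel))"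
    by (simp add: lborel_prod)
  also have "\<dots> = (\<integral>\<^sup>+u. \<integral>\<^sup>+v. ennreal (g0 (u, v)) \<partial>lborel \<partial>lborel)"
    by (rule lborel.nn_integral_fst[symmetric]) (rule lb2, unfold g0_alt, measurable)
  also have "\<dots> = (\<integral>\<^sup>+u. ennreal (exp (- pi * u^2)) * (\<integral>\<^sup>+v. ennreal (exp (- pi * v^2)) \<partial>lborel) \<partial>lborel)"
  proof (rule nn_integral_cong)
    fix u :: real
    have "(\<integral>\<^sup>+v. ennreal (g0 (u, v)) \<partial>lborel) = (\<integral>\<^sup>+v. ennreal (exp (- pi * u^2)) * ennreal (exp (- pi * v^2)) \<partial>lborel)"
      by (intro nn_integral_cong) (simp add: g0_def norm_Pair ennreal_mult'[symmetric] exp_add[symmetric] algebra_simps)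
    also have "\<dots> = ennreal (exp (- pi * u^2)) * (\<integral>\<^sup>+v. ennreal (exp (- pi * v^2)) \<partial>lborel)"
      by (rule nn_integral_cmult) measurable
    finally show "(\<integral>\<^sup>+v. ennreal (g0 (u, v)) \<partial>lborel) = \<dots>" .
  qed
  also have "\<dots> = 1" by (simp only: gauss1 mult_1_right)
  finally show ?thesis .
qed

definition mu :: "(real \<times> real) measure" where "mu = density lborel (\<lambda>c. ennreal (g0 c))"

lemma mu_prob: "prob_space mu"
proof
  show "emeasure mu (space mu) = 1"
    unfolding mu_def using gauss2 by (subst emeasure_density) (auto simp: g0_def)
qed

lemma sets_mu[simp]: "sets mu = sets borel" by (simp add: mu_def)

lemma mu_lower:
  assumes S: "S \<in> sets borel" and Sb: "\<And>c. c \<in> S \<Longrightarrow> (norm c)^2 < b"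
  shows "ennreal (exp (- pi * b)) * emeasure lborel S \<le> emeasure mu S"
proof -
  have "ennreal (exp (- pi * b)) * emeasure lborel S = (\<integral>\<^sup>+c. ennreal (exp (- pi * b)) * indicator S c \<partial>lborel)"
    using S by (simp add: nn_integral_cmult_indicator)
  also have "\<dots> \<le> (\<integral>\<^sup>+c. ennreal (g0 c) * indicator S c \<partial>lborel)"
  proof (rule nn_integral_mono)
    fix c show "ennreal (exp (- pi * b)) * indicator S c \<le> ennreal (g0 c) * indicator S c"
    proof (cases "c \<in> S")
      case True
      then have "exp (- pi * b) \<le> g0 c" using Sb[OF True] unfolding g0_def by simp
      then show ?thesis using True by (simp add: ennreal_leI)
    qed simp
  qed
  also have "\<dots> = emeasure mu S" unfolding mu_def using S by (subst emeasure_density) (auto simp: g0_def)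
  finally show ?thesis .
qed


lemma ann_disj:
  assumes h: "0 < h" and "i \<noteq> j"
  shows "ann h i \<inter> ann h j = {}"
proof (rule ccontr)
  assume "ann h i \<inter> ann h j \<noteq> {}"
  then obtain c where ci: "c \<in> ann h i" and cj: "c \<in> ann h j" by blast
  have "real i * h < real (Suc j) * h" using ci cj unfolding ann_def by auto
  then have "i < Suc j" using h by (simp add: mult_less_cancel_right)
  moreover have "real j * h < real (Suc i) * h" using ci cj unfolding ann_def by auto
  then have "j < Suc i" using h by (simp add: mult_less_cancel_right)
  ultimately show False using \<open>i \<noteq> j\<close> by simp
qed

context
  fixes M :: "'w measure" and Pts :: "'w \<Rightarrow> (real \<times> real) set"
  assumes PPP: "unit_poisson_point_process M Pts"
begin

lemma ES_sub:
  assumes h: "0 < h"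
  shows "{\<omega> \<in> space M. nearE (Pts \<omega>) \<and> nearest_to_origin (Pts \<omega>) \<in> U \<inter> ann h k} \<subseteq>
     {\<omega> \<in> space M. card (Pts \<omega> \<inter> bsq (real k * h)) = 0 \<and> card (Pts \<omega> \<inter> (U \<inter> ann h k)) \<noteq> 0}"
proof
  fix \<omega> assume w: "\<omega> \<in> {\<omega> \<in> space M. nearE (Pts \<omega>) \<and> nearest_to_origin (Pts \<omega>) \<in> U \<inter> ann h k}"
  then have wM: "\<omega> \<in> space M" and E: "nearE (Pts \<omega>)" and cA: "nearest_to_origin (Pts \<omega>) \<in> U \<inter> ann h k" by auto
  define c where "c = nearest_to_origin (Pts \<omega>)"
  note np = nearest_props[OF E, folded c_def]
  have ck: "real k * h \<le> (norm c)^2" using cA unfolding c_def ann_def by simp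
  have e1: "Pts \<omega> \<inter> bsq (real k * h) = {}"
  proof (rule ccontr)
    assume "Pts \<omega> \<inter> bsq (real k * h) \<noteq> {}"
    then obtain p where p: "p \<in> Pts \<omega>" "(norm p)^2 < real k * h" unfolding bsq_def by auto
    have "(norm c)^2 \<le> (norm p)^2" using power_mono[OF np(2)[OF p(1)], of 2] by simp
    then show False using p(2) ck by linarith
  qed
  have fin2: "finite (Pts \<omega> \<inter> (U \<inter> ann h k))"
    using fin[OF PPP wM, of "U \<inter> ann h k"] ann_sets(2)[of h k] h bounded_subset[of "ann h k" "U \<inter> ann h k"] by auto
  have "c \<in> Pts \<omega> \<inter> (U \<inter> ann h k)" using np(1) cA unfolding c_def by simp
  then have "card (Pts \<omega> \<inter> (U \<inter> ann h k)) \<noteq> 0" using fin2 by auto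
  then show "\<omega> \<in> {\<omega> \<in> space M. card (Pts \<omega> \<inter> bsq (real k * h)) = 0 \<and> card (Pts \<omega> \<inter> (U \<inter> ann h k)) \<noteq> 0}"
    using wM e1 by simp
qed

lemma nu_k:
  assumes U: "U \<in> sets borel" and h: "0 < h"
  shows "emeasure M {\<omega> \<in> space M. nearE (Pts \<omega>) \<and> nearest_to_origin (Pts \<omega>) \<in> U \<inter> ann h k}
    \<le> ennreal (exp (pi * h)) * emeasure mu (U \<inter> ann h k)"
proof -
  interpret prob_space M by (rule ps[OF PPP])
  define A where "A = U \<inter> ann h k"
  have As: "A \<in> sets borel" "bounded A" unfolding A_def
    using U ann_sets[of h k] h bounded_subset[of "ann h k" "U \<inter> ann h k"] by auto
  have Bs: "bsq (real k * h) \<in> sets borel" "bounded (bsq (real k * h))" by (rule bsq_sets)+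
  have D: "bsq (real k * h) \<inter> A = {}" unfolding A_def ann_def bsq_def by auto
  define x where "x = measure lborel A"
  have x0: "0 \<le> x" unfolding x_def by simp
  have ex: "emeasure lborel A = ennreal x"
    unfolding x_def using emeasure_bounded_finite[OF As(2)] by (intro emeasure_eq_ennreal_measure) auto
  have S: "{\<omega> \<in> space M. card (Pts \<omega> \<inter> bsq (real k * h)) = 0 \<and> card (Pts \<omega> \<inter> A) \<noteq> 0} \<in> sets M"
  proof -
    have "{\<omega> \<in> space M. card (Pts \<omega> \<inter> bsq (real k * h)) = 0 \<and> card (Pts \<omega> \<inter> A) \<noteq> 0} =
      {\<omega> \<in> space M. card (Pts \<omega> \<inter> bsq (real k * h)) = 0} \<inter> {\<omega> \<in> space M. card (Pts \<omega> \<inter> A) \<noteq> 0}" by auto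
    then show ?thesis using cnt_set[OF PPP Bs, of "\<lambda>n. n = 0"] cnt_set[OF PPP As, of "\<lambda>n. n \<noteq> 0"] by auto
  qed
  have "emeasure M {\<omega> \<in> space M. nearE (Pts \<omega>) \<and> nearest_to_origin (Pts \<omega>) \<in> U \<inter> ann h k}
     \<le> emeasure M {\<omega> \<in> space M. card (Pts \<omega> \<inter> bsq (real k * h)) = 0 \<and> card (Pts \<omega> \<inter> A) \<noteq> 0}"
    using ES_sub[OF h, of U k] S unfolding A_def by (intro emeasure_mono) auto
  also have "\<dots> = ennreal (exp (- (pi * (real k * h))) * (1 - exp (- x)))"
    using indep2[OF PPP Bs As D] mvol_bsq[of "real k * h"] h unfolding x_def
    by (simp add: emeasure_eq_measure)
  also have "\<dots> \<le> ennreal (exp (- (pi * (real k * h))) * x)"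
  proof (rule ennreal_leI)
    have "1 - exp (- x) \<le> x" using exp_ge_add_one_self[of "- x"] by simp
    then show "exp (- (pi * (real k * h))) * (1 - exp (- x)) \<le> exp (- (pi * (real k * h))) * x"
      by (intro mult_left_mono) auto
  qed
  also have "exp (- (pi * (real k * h))) * x = exp (pi * h) * (exp (- pi * (real (Suc k) * h)) * x)"
  proof -
    have "exp (pi * h) * exp (- pi * (real (Suc k) * h)) = exp (- (pi * (real k * h)))"
      by (simp add: exp_add[symmetric] algebra_simps)
    then show ?thesis by (metis mult.assoc)
  qed
  also have "ennreal \<dots> = ennreal (exp (pi * h)) * (ennreal (exp (- pi * (real (Suc k) * h))) * emeasure lborel A)"
    unfolding ex using x0 by (simp add: ennreal_mult')
  also have "\<dots> \<le> ennreal (exp (pi * h)) * emeasure mu A"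
  proof (rule mult_left_mono)
    show "ennreal (exp (- pi * (real (Suc k) * h))) * emeasure lborel A \<le> emeasure mu A"
      using As(1) by (rule mu_lower) (auto simp: A_def ann_def)
  qed simp
  finally show ?thesis unfolding A_def .
qed

lemma nu_le_h:
  assumes U: "U \<in> sets borel" and h: "0 < h"
  shows "emeasure M {\<omega> \<in> space M. nearE (Pts \<omega>) \<and> nearest_to_origin (Pts \<omega>) \<in> U}
    \<le> ennreal (exp (pi * h)) * emeasure mu U"
proof -
  define A where "A k = U \<inter> ann h k" for k
  define ES where "ES X = {\<omega> \<in> space M. nearE (Pts \<omega>) \<and> nearest_to_origin (Pts \<omega>) \<in> X}" for X
  have dA: "disjoint_family A" unfolding disjoint_family_on_def A_def using ann_disj[OF h] by blast
  have UA: "U = (\<Union>k. A k)"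
  proof
    show "U \<subseteq> (\<Union>k. A k)" using ann_cover[OF h] unfolding A_def by blast
    show "(\<Union>k. A k) \<subseteq> U" unfolding A_def by blast
  qed
  have As: "A k \<in> sets borel" for k unfolding A_def using U ann_sets[of h k] h by auto
  have ESs: "ES (A k) \<in> sets M" for k unfolding ES_def by (rule ES_meas[OF PPP As])
  have dES: "disjoint_family (\<lambda>k. ES (A k))"
    using dA unfolding disjoint_family_on_def ES_def by blast
  have ESU: "ES U = (\<Union>k. ES (A k))" unfolding ES_def using UA by blast
  have "emeasure M (ES U) = (\<Sum>k. emeasure M (ES (A k)))"
    unfolding ESU using ESs dES by (intro suminf_emeasure[symmetric]) auto
  also have "\<dots> \<le> (\<Sum>k. ennreal (exp (pi * h)) * emeasure mu (A k))"
    by (intro suminf_le summableI, unfold ES_def A_def, rule nu_k[OF U h])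
  also have "\<dots> = ennreal (exp (pi * h)) * (\<Sum>k. emeasure mu (A k))" by simp
  also have "(\<Sum>k. emeasure mu (A k)) = emeasure mu U"
    unfolding UA using As dA by (intro suminf_emeasure) auto
  finally show ?thesis unfolding ES_def .
qed

lemma nu_le:
  assumes U: "U \<in> sets borel"
  shows "measure M {\<omega> \<in> space M. nearE (Pts \<omega>) \<and> nearest_to_origin (Pts \<omega>) \<in> U} \<le> measure mu U"
proof (rule field_le_epsilon)
  interpret prob_space M by (rule ps[OF PPP])
  interpret m: prob_space mu by (rule mu_prob)
  fix e :: real assume e: "0 < e"
  define h where "h = ln (1 + e) / pi"
  have h0: "0 < h" unfolding h_def using e by simp
  have eh: "exp (pi * h) = 1 + e" unfolding h_def using e by simp
  have "ennreal (measure M {\<omega> \<in> space M. nearE (Pts \<omega>) \<and> nearest_to_origin (Pts \<omega>) \<in> U})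
      \<le> ennreal (exp (pi * h)) * ennreal (measure mu U)"
    using nu_le_h[OF U h0] by (simp add: emeasure_eq_measure m.emeasure_eq_measure)
  also have "\<dots> = ennreal ((1 + e) * measure mu U)" unfolding eh using e by (simp add: ennreal_mult')
  finally have "measure M {\<omega> \<in> space M. nearE (Pts \<omega>) \<and> nearest_to_origin (Pts \<omega>) \<in> U} \<le> (1 + e) * measure mu U"
    using e by (simp add: ennreal_le_iff)
  also have "\<dots> = measure mu U + e * measure mu U" by (simp add: algebra_simps)
  also have "\<dots> \<le> measure mu U + e * 1" using e by (intro add_left_mono mult_left_mono) auto
  finally show "measure M {\<omega> \<in> space M. nearE (Pts \<omega>) \<and> nearest_to_origin (Pts \<omega>) \<in> U} \<le> measure mu U + e" by simp
qed

end

context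
  fixes M :: "'w measure" and Pts :: "'w \<Rightarrow> (real \<times> real) set"
  assumes PPP: "unit_poisson_point_process M Pts"
begin

lemma lawC: "distr M lborel (\<lambda>\<omega>. nearest_to_origin (Pts \<omega>)) = mu"
proof (rule measure_eqI)
  interpret prob_space M by (rule ps[OF PPP])
  interpret m: prob_space mu by (rule mu_prob)
  show "sets (distr M lborel (\<lambda>\<omega>. nearest_to_origin (Pts \<omega>))) = sets mu" by simp
  fix A assume "A \<in> sets (distr M lborel (\<lambda>\<omega>. nearest_to_origin (Pts \<omega>)))"
  then have A: "A \<in> sets borel" by simp
  have Ac: "- A \<in> sets borel" using A by auto
  define C where "C \<omega> = nearest_to_origin (Pts \<omega>)" for \<omega>
  define ES where "ES X = {\<omega> \<in> space M. nearE (Pts \<omega>) \<and> C \<omega> \<in> X}" for X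
  define E where "E = {\<omega> \<in> space M. nearE (Pts \<omega>)}"
  have Cm: "C \<in> measurable M lborel" unfolding C_def using C_meas[OF PPP] by simp
  have ESs: "X \<in> sets borel \<Longrightarrow> ES X \<in> sets M" for X unfolding ES_def C_def by (rule ES_meas[OF PPP])
  have Es: "E \<in> sets M" unfolding E_def by (rule E_sets[OF PPP])
  have PE1: "prob E = 1" unfolding E_def by (rule PE[OF PPP])
  have PEc: "prob (space M - E) = 0" using prob_compl[OF Es] PE1 by simp
  have pre: "C -` A \<inter> space M \<in> sets M" using Cm A by (simp add: measurable_sets_borel)
  have a1: "prob (ES A) \<le> prob (C -` A \<inter> space M)"
    using pre by (intro finite_measure_mono) (auto simp: ES_def)
  have a2: "prob (C -` A \<inter> space M) \<le> prob (ES A \<union> (space M - E))"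
    using ESs[OF A] Es by (intro finite_measure_mono) (auto simp: ES_def E_def)
  also have "\<dots> \<le> prob (ES A) + prob (space M - E)" using ESs[OF A] Es by (intro measure_Un_le) auto
  finally have eq1: "prob (C -` A \<inter> space M) = prob (ES A)" using a1 PEc by simp
  have "prob (ES A) + prob (ES (- A)) = prob (ES A \<union> ES (- A))"
    using ESs[OF A] ESs[OF Ac] by (intro finite_measure_Union[symmetric]) (auto simp: ES_def)
  also have "ES A \<union> ES (- A) = E" unfolding ES_def E_def by auto
  finally have s1: "prob (ES A) + prob (ES (- A)) = 1" using PE1 by simp
  have s2: "m.prob A + m.prob (- A) = 1"
  proof -
    have sp: "space mu = UNIV" by (simp add: mu_def)
    have "m.prob (space mu - A) = 1 - m.prob A" using m.prob_compl[of A] A by simp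
    then show ?thesis unfolding sp by (simp add: Compl_eq_Diff_UNIV)
  qed
  have l1: "prob (ES A) \<le> m.prob A" unfolding ES_def C_def by (rule nu_le[OF PPP A])
  have l2: "prob (ES (- A)) \<le> m.prob (- A)" unfolding ES_def C_def by (rule nu_le[OF PPP Ac])
  have eq2: "prob (ES A) = m.prob A" using s1 s2 l1 l2 by linarith
  have "emeasure (distr M lborel C) A = emeasure M (C -` A \<inter> space M)"
    using Cm A by (intro emeasure_distr) auto
  also have "\<dots> = emeasure mu A" using eq1 eq2 by (simp add: emeasure_eq_measure m.emeasure_eq_measure)
  finally show "emeasure (distr M lborel (\<lambda>\<omega>. nearest_to_origin (Pts \<omega>))) A = emeasure mu A"
    unfolding C_def .
qed

end

theorem mainTheorem13:
  fixes M :: "'w measure" and Pts :: "'w \<Rightarrow> (real \<times> real) set"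
  assumes "unit_poisson_point_process M Pts"
  shows "distributed M lborel
     (\<lambda>\<omega>. (interior_angle (1, 0) (0, 0) (nearest_to_origin (Pts \<omega>)),
            interior_angle (0, 0) (1, 0) (nearest_to_origin (Pts \<omega>))))
     (\<lambda>(x, y). ennreal (if 0 < x \<and> 0 < y \<and> x + y < pi
        then 2 * exp (- pi * (sin x ^ 2 / sin (x + y) ^ 2)) * (sin x * sin y / sin (x + y) ^ 3)
        else 0))"
proof -
  note PPP = assms
  define C where "C \<omega> = nearest_to_origin (Pts \<omega>)" for \<omega>
  have X: "(\<lambda>\<omega>. (interior_angle (1, 0) (0, 0) (nearest_to_origin (Pts \<omega>)),
            interior_angle (0, 0) (1, 0) (nearest_to_origin (Pts \<omega>)))) = Phi \<circ> C"
    by (simp add: fun_eq_iff Phi_def C_def)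
  have f: "(\<lambda>(x, y). ennreal (if 0 < x \<and> 0 < y \<and> x + y < pi
        then 2 * exp (- pi * (sin x ^ 2 / sin (x + y) ^ 2)) * (sin x * sin y / sin (x + y) ^ 3)
        else 0)) = (\<lambda>z. ennreal (fd z))"
    by (simp add: fun_eq_iff fd_def)
  have Cm: "C \<in> measurable M lborel" unfolding C_def using C_meas[OF PPP] by simp
  have Pm: "Phi \<in> measurable lborel lborel" using Phi_meas by simp
  have "distr M lborel (Phi \<circ> C) = distr (distr M lborel C) lborel Phi"
    by (rule distr_distr[OF Pm Cm, symmetric])
  also have "distr M lborel C = mu" unfolding C_def by (rule lawC[OF PPP])
  also have "distr mu lborel Phi = density lborel (\<lambda>z. ennreal (fd z))" unfolding mu_def by (rule push)
  finally have d: "distr M lborel (Phi \<circ> C) = density lborel (\<lambda>z. ennreal (fd z))" .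
  show ?thesis unfolding X f distributed_def
    using d fd_meas measurable_comp[OF Cm Pm] by (simp add: comp_def)
qed


end
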